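(* (Strong Laurent phenomenon.) For any $m\in\mathbb{Z}$, $$\mathcal{A}(P_1,P_2)=\bigcap_{k\in\mathbb{Z}}\mathcal{T}_k=\bigcap_{k=m-1}^{m+1}\mathcal{T}_k,$$ the intersections taken in $\Bbbk(x_1,x_2)$.
   Context: $\Bbbk$ is a field of characteristic zero and $P_1,P_2\in\Bbbk[z]$ are monic palindromic polynomials of degrees $d_1,d_2\ge0$ (palindromic: $P(z)=z^dP(z^{-1})$ for $d=\deg P$). With $x_1,x_2$ commuting indeterminates, define $x_k\in\Bbbk(x_1,x_2)$ for all $k\in\mathbb{Z}$ by $x_{k+1}x_{k-1}=P_1(x_k)$ if $k$ is even and $x_{k+1}x_{k-1}=P_2(x_k)$ if $k$ is odd. $\underline\Bbbk$ is the $\mathbb{Z}$-subalgebra of $\Bbbk$ generated by the coefficients of $P_1,P_2$; $\mathcal{A}(P_1,P_2)$ is the $\underline\Bbbk$-subalgebra of $\Bbbk(x_1,x_2)$ generated by all $x_k$; $\mathcal{T}_k=\underline\Bbbk[x_k^{\pm1},x_{k+1}^{\pm1}]$. *)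

theory Defs
  imports "HOL-Computational_Algebra.Polynomial" "HOL-Computational_Algebra.Fraction_Field"
begin

text \<open>The field of rational functions k(x1,x2), realised as the fraction field of
  k[x1][x2] (outer polynomial variable = x2, inner = x1).\<close>
type_synonym 'k ratfun2 = "'k poly poly fract"

definition const2 :: "'k::field \<Rightarrow> 'k ratfun2" where
  "const2 c = Fract [:[:c:]:] 1"

definition X1 :: "'k::field ratfun2" where
  "X1 = Fract [:[:0, 1:]:] 1"

definition X2 :: "'k::field ratfun2" where
  "X2 = Fract [:0, 1:] 1"

definition evalP :: "'k::field poly \<Rightarrow> 'k ratfun2 \<Rightarrow> 'k ratfun2" where
  "evalP P y = poly (map_poly const2 P) y"

text \<open>Palindromic: P(z) = z^d P(1/z) with d = deg P, i.e. symmetric coefficients.\<close>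
definition palindromic :: "'k::field poly \<Rightarrow> bool" where
  "palindromic P \<longleftrightarrow> (\<forall>i\<le>degree P. coeff P i = coeff P (degree P - i))"

inductive_set ring_gen :: "'a::comm_ring_1 set \<Rightarrow> 'a set" for S where
  one: "1 \<in> ring_gen S"
| gen: "s \<in> S \<Longrightarrow> s \<in> ring_gen S"
| add: "a \<in> ring_gen S \<Longrightarrow> b \<in> ring_gen S \<Longrightarrow> a + b \<in> ring_gen S"
| neg: "a \<in> ring_gen S \<Longrightarrow> - a \<in> ring_gen S"
| mult: "a \<in> ring_gen S \<Longrightarrow> b \<in> ring_gen S \<Longrightarrow> a * b \<in> ring_gen S"

definition kbar :: "'k::field poly \<Rightarrow> 'k poly \<Rightarrow> 'k set" where
  "kbar P1 P2 = ring_gen (range (coeff P1) \<union> range (coeff P2))"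

text \<open>The polynomial used in the exchange relation at index k:
  x_{k+1} x_{k-1} = P1(x_k) if k even, P2(x_k) if k odd.\<close>
definition Psel :: "'k::field poly \<Rightarrow> 'k poly \<Rightarrow> int \<Rightarrow> 'k poly" where
  "Psel P1 P2 k = (if even k then P1 else P2)"

text \<open>fwd n = (x_{n+1}, x_{n+2}).\<close>
fun fwd :: "'k::field poly \<Rightarrow> 'k poly \<Rightarrow> nat \<Rightarrow> 'k ratfun2 \<times> 'k ratfun2" where
  "fwd P1 P2 0 = (X1, X2)"
| "fwd P1 P2 (Suc n) = (let (a, b) = fwd P1 P2 n in
     (b, evalP (Psel P1 P2 (int n + 2)) b / a))"

text \<open>bwd n = (x_{1-n}, x_{2-n}).\<close>
fun bwd :: "'k::field poly \<Rightarrow> 'k poly \<Rightarrow> nat \<Rightarrow> 'k ratfun2 \<times> 'k ratfun2" where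
  "bwd P1 P2 0 = (X1, X2)"
| "bwd P1 P2 (Suc n) = (let (a, b) = bwd P1 P2 n in
     (evalP (Psel P1 P2 (1 - int n)) a / b, a))"

definition xseq :: "'k::field poly \<Rightarrow> 'k poly \<Rightarrow> int \<Rightarrow> 'k ratfun2" where
  "xseq P1 P2 k = (if k \<ge> 1 then fst (fwd P1 P2 (nat (k - 1)))
                   else fst (bwd P1 P2 (nat (1 - k))))"

definition clusterA :: "'k::field poly \<Rightarrow> 'k poly \<Rightarrow> 'k ratfun2 set" where
  "clusterA P1 P2 = ring_gen (const2 ` kbar P1 P2 \<union> range (xseq P1 P2))"

definition Tk :: "'k::field poly \<Rightarrow> 'k poly \<Rightarrow> int \<Rightarrow> 'k ratfun2 set" where
  "Tk P1 P2 k = ring_gen (const2 ` kbar P1 P2 \<union>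
     {xseq P1 P2 k, inverse (xseq P1 P2 k), xseq P1 P2 (k + 1), inverse (xseq P1 P2 (k + 1))})"

end

theory Submission
  imports Defs
begin


definition iota :: "'k::field poly poly \<Rightarrow> 'k ratfun2" where "iota p = Fract p 1"

lemma iota_add: "iota (p + q) = iota p + iota q" by (simp add: iota_def)
lemma iota_mult: "iota (p * q) = iota p * iota q" by (simp add: iota_def)
lemma iota_minus: "iota (- p) = - iota p" by (simp add: iota_def)
lemma iota_diff: "iota (p - q) = iota p - iota q" by (simp add: iota_def)
lemma iota_0: "iota 0 = 0" by (simp add: iota_def fract_collapse)
lemma iota_1: "iota 1 = 1" by (simp add: iota_def fract_collapse)
lemma iota_pow: "iota (p ^ n) = iota p ^ n" by (induct n) (simp_all add: iota_1 iota_mult)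
lemma iota_eq: "iota p = iota q \<longleftrightarrow> p = q" by (simp add: iota_def eq_fract)
lemma iota_eq0: "iota p = 0 \<longleftrightarrow> p = 0" using iota_eq[of p 0] by (simp add: iota_0)
lemma Fract_iota: "Fract p q = iota p / iota q" by (simp add: iota_def)

lemma const2_iota: "const2 c = iota [:[:c:]:]" by (simp add: const2_def iota_def)
lemma X1_iota: "X1 = iota [:[:0,1:]:]" by (simp add: X1_def iota_def)
lemma X2_iota: "X2 = iota [:0,1:]" by (simp add: X2_def iota_def)

lemma const2_0[simp]: "const2 0 = 0" by (simp add: const2_iota iota_0)
lemma const2_1[simp]: "const2 1 = 1" by (simp add: const2_iota iota_1[unfolded one_pCons])
lemma const2_add: "const2 (a + b) = const2 a + const2 b"
  by (simp add: const2_iota iota_add[symmetric])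
lemma const2_mult: "const2 (a * b) = const2 a * const2 b"
  by (simp add: const2_iota iota_mult[symmetric])
lemma const2_minus: "const2 (- a) = - const2 a"
  by (simp add: const2_iota iota_minus[symmetric])
lemma const2_inj: "const2 a = const2 b \<longleftrightarrow> a = b"
  by (simp add: const2_iota iota_eq)

lemma sum_hom:
  assumes "h 0 = 0" "\<And>a b. h (a + b) = h a + h b"
  shows "h (sum f A) = sum (h \<circ> f) A"
  by (induct A rule: infinite_finite_induct) (simp_all add: assms)

lemma map_poly_add_hom:
  assumes "h 0 = 0" "\<And>a b. h (a + b) = h a + h b"
  shows "map_poly h (p + q) = map_poly h p + map_poly h q"
  by (rule poly_eqI) (simp add: coeff_map_poly assms)

lemma map_poly_mult_hom:
  fixes h :: "'a::comm_ring_1 \<Rightarrow> 'b::comm_ring_1"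
  assumes "h 0 = 0" "\<And>a b. h (a + b) = h a + h b" "\<And>a b. h (a * b) = h a * h b"
  shows "map_poly h (p * q) = map_poly h p * map_poly h q"
proof (rule poly_eqI)
  fix n
  show "coeff (map_poly h (p * q)) n = coeff (map_poly h p * map_poly h q) n"
    by (simp add: coeff_map_poly assms(1) coeff_mult sum_hom[of h, OF assms(1,2)] assms(3) o_def)
qed

lemma evalP_0[simp]: "evalP 0 u = 0" by (simp add: evalP_def)
lemma evalP_pCons: "evalP (pCons c q) u = const2 c + u * evalP q u"
  by (simp add: evalP_def map_poly_pCons)
lemma evalP_const[simp]: "evalP [:c:] u = const2 c"
  by (simp add: evalP_def map_poly_pCons)
lemma evalP_1[simp]: "evalP 1 u = 1"
  by (simp add: one_pCons)
lemma evalP_X[simp]: "evalP [:0,1:] u = u"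
  by (simp add: evalP_pCons)
lemma evalP_add: "evalP (p + q) u = evalP p u + evalP q u"
  by (simp add: evalP_def map_poly_add_hom const2_add)
lemma evalP_mult: "evalP (p * q) u = evalP p u * evalP q u"
  by (simp add: evalP_def map_poly_mult_hom const2_add const2_mult)
lemma evalP_minus: "evalP (- p) u = - evalP p u"
  using evalP_add[of p "-p" u] by (simp add: algebra_simps eq_neg_iff_add_eq_0)
lemma evalP_diff: "evalP (p - q) u = evalP p u - evalP q u"
  using evalP_add[of "p - q" q u] by simp
lemma evalP_pow: "evalP (p ^ n) u = evalP p u ^ n"
  by (induct n) (simp_all add: evalP_mult)
lemma evalP_smult: "evalP (smult c p) u = const2 c * evalP p u"
  by (induct p) (simp_all add: evalP_pCons algebra_simps const2_mult)




definition ev2 :: "'k::field poly poly \<Rightarrow> 'k ratfun2 \<Rightarrow> 'k ratfun2 \<Rightarrow> 'k ratfun2" where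
  "ev2 p u v = poly (map_poly (\<lambda>q. evalP q u) p) v"

lemma ev2_0[simp]: "ev2 0 u v = 0" by (simp add: ev2_def)
lemma ev2_pCons: "ev2 (pCons q p) u v = evalP q u + v * ev2 p u v"
  by (simp add: ev2_def map_poly_pCons)
lemma ev2_const[simp]: "ev2 [:q:] u v = evalP q u"
  by (simp add: ev2_pCons)
lemma ev2_1[simp]: "ev2 1 u v = 1" by (simp add: one_pCons ev2_pCons)
lemma ev2_Y[simp]: "ev2 [:0,1:] u v = v" by (simp add: ev2_pCons)
lemma ev2_X[simp]: "ev2 [:[:0,1:]:] u v = u" by simp
lemma ev2_add: "ev2 (p + q) u v = ev2 p u v + ev2 q u v"
  by (simp add: ev2_def map_poly_add_hom evalP_add)
lemma ev2_mult: "ev2 (p * q) u v = ev2 p u v * ev2 q u v"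
  by (simp add: ev2_def map_poly_mult_hom evalP_add evalP_mult)
lemma ev2_minus: "ev2 (- p) u v = - ev2 p u v"
  using ev2_add[of p "-p" u v] by (simp add: algebra_simps eq_neg_iff_add_eq_0)
lemma ev2_diff: "ev2 (p - q) u v = ev2 p u v - ev2 q u v"
  using ev2_add[of "p - q" q u v] by simp
lemma ev2_pow: "ev2 (p ^ n) u v = ev2 p u v ^ n"
  by (induct n) (simp_all add: ev2_mult)
lemma ev2_smult: "ev2 (smult c p) u v = evalP c u * ev2 p u v"
  by (induct p) (simp_all add: ev2_pCons algebra_simps evalP_mult)
lemma ev2_monom: "ev2 (monom c n) u v = evalP c u * v ^ n"
  by (induct n) (simp_all add: monom_0 monom_Suc ev2_pCons)

lemma evalP_X1: "evalP q X1 = iota [:q:]"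
proof (induct q)
  case 0 then show ?case by (simp add: iota_0)
next
  case (pCons c q)
  have e: "[:pCons c q:] = [:[:c:]:] + [:[:0,1:]:] * [:q:]" by simp
  show ?case using pCons by (simp add: evalP_pCons const2_iota X1_iota) (metis e iota_add iota_mult)
qed

lemma ev2_X1X2: "ev2 p X1 X2 = iota p"
proof (induct p)
  case 0 then show ?case by (simp add: iota_0)
next
  case (pCons q p)
  have e: "pCons q p = [:q:] + [:0,1:] * p" by simp
  show ?case using pCons by (simp add: ev2_pCons evalP_X1 X2_iota) (metis e iota_add iota_mult)
qed

lemma rg_0: "0 \<in> ring_gen S"
  using ring_gen.add[OF ring_gen.one ring_gen.neg[OF ring_gen.one]] by simp
lemma rg_diff: "a \<in> ring_gen S \<Longrightarrow> b \<in> ring_gen S \<Longrightarrow> a - b \<in> ring_gen S"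
  by (metis diff_conv_add_uminus ring_gen.add ring_gen.neg)
lemma rg_pow: "a \<in> ring_gen S \<Longrightarrow> a ^ n \<in> ring_gen S"
proof (induct n)
  case 0 then show ?case by (simp add: ring_gen.one)
next
  case (Suc n) then show ?case by (simp add: ring_gen.mult)
qed
lemma rg_sum: "(\<And>x. x \<in> A \<Longrightarrow> f x \<in> ring_gen S) \<Longrightarrow> sum f A \<in> ring_gen S"
proof (induct A rule: infinite_finite_induct)
  case (insert x F) then show ?case by (simp add: ring_gen.add)
qed (simp_all add: rg_0)

lemma rg_least:
  assumes "1 \<in> R" "S \<subseteq> R" "\<And>a b. a \<in> R \<Longrightarrow> b \<in> R \<Longrightarrow> a + b \<in> R"
    "\<And>a. a \<in> R \<Longrightarrow> - a \<in> R" "\<And>a b. a \<in> R \<Longrightarrow> b \<in> R \<Longrightarrow> a * b \<in> R"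
  shows "ring_gen S \<subseteq> R"
proof
  fix x assume "x \<in> ring_gen S" then show "x \<in> R"
  proof (induct rule: ring_gen.induct)
    case one show ?case by (rule assms(1))
  next
    case (gen s) then show ?case using assms(2) by blast
  next
    case (add a b) then show ?case using assms(3) by blast
  next
    case (neg a) then show ?case using assms(4) by blast
  next
    case (mult a b) then show ?case using assms(5) by blast
  qed
qed

lemma rg_sub: "S \<subseteq> ring_gen T \<Longrightarrow> ring_gen S \<subseteq> ring_gen T"
  by (rule rg_least) (simp_all add: ring_gen.one ring_gen.add ring_gen.neg ring_gen.mult)

lemma rg_mono: "S \<subseteq> T \<Longrightarrow> ring_gen S \<subseteq> ring_gen T"
  by (rule rg_sub) (auto intro: ring_gen.gen)

lemma rg_image:
  assumes "h 1 = 1" "\<And>a b. h (a + b) = h a + h b" "\<And>a. h (- a) = - h a" "\<And>a b. h (a * b) = h a * h b"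
  shows "h ` ring_gen S \<subseteq> ring_gen (h ` S)"
proof -
  have "ring_gen S \<subseteq> {x. h x \<in> ring_gen (h ` S)}"
    by (rule rg_least) (auto simp: assms ring_gen.one ring_gen.add ring_gen.neg ring_gen.mult intro: ring_gen.gen)
  then show ?thesis by blast
qed

lemma rg_preimage:
  assumes "h 1 = 1" "\<And>a b. h (a + b) = h a + h b" "\<And>a. h (- a) = - h a" "\<And>a b. h (a * b) = h a * h b"
  shows "ring_gen (h ` S) \<subseteq> h ` ring_gen S"
proof (rule rg_least)
  show "1 \<in> h ` ring_gen S" using assms(1) ring_gen.one by (metis imageI)
  show "h ` S \<subseteq> h ` ring_gen S" by (auto intro: ring_gen.gen)
  fix a b assume "a \<in> h ` ring_gen S" "b \<in> h ` ring_gen S"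
  then obtain x y where "x \<in> ring_gen S" "y \<in> ring_gen S" "a = h x" "b = h y" by auto
  then show "a + b \<in> h ` ring_gen S" "a * b \<in> h ` ring_gen S"
    by (metis assms(2) imageI ring_gen.add, metis assms(4) imageI ring_gen.mult)
next
  fix a assume "a \<in> h ` ring_gen S"
  then obtain x where "x \<in> ring_gen S" "a = h x" by auto
  then show "- a \<in> h ` ring_gen S" by (metis assms(3) imageI ring_gen.neg)
qed

subsection \<open>Subrings of k and coefficient conditions\<close>

definition subr :: "'a::comm_ring_1 set \<Rightarrow> bool" where
  "subr K \<longleftrightarrow> 1 \<in> K \<and> (\<forall>a\<in>K. \<forall>b\<in>K. a + b \<in> K \<and> a * b \<in> K) \<and> (\<forall>a\<in>K. - a \<in> K)"

lemma subr_rg: "subr (ring_gen S)"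
  by (simp add: subr_def ring_gen.intros)

lemma subr_kbar: "subr (kbar P1 P2)"
  by (simp add: kbar_def subr_rg)

lemma subr_0: "subr K \<Longrightarrow> 0 \<in> K"
  unfolding subr_def by (metis add.right_inverse)
lemma subr_add: "subr K \<Longrightarrow> a \<in> K \<Longrightarrow> b \<in> K \<Longrightarrow> a + b \<in> K"
  unfolding subr_def by blast
lemma subr_mult: "subr K \<Longrightarrow> a \<in> K \<Longrightarrow> b \<in> K \<Longrightarrow> a * b \<in> K"
  unfolding subr_def by blast
lemma subr_neg: "subr K \<Longrightarrow> a \<in> K \<Longrightarrow> - a \<in> K"
  unfolding subr_def by blast
lemma subr_1: "subr K \<Longrightarrow> 1 \<in> K"
  unfolding subr_def by blast
lemma subr_sum: "subr K \<Longrightarrow> (\<And>x. x \<in> A \<Longrightarrow> f x \<in> K) \<Longrightarrow> sum f A \<in> K"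
  by (induct A rule: infinite_finite_induct) (simp_all add: subr_0 subr_add)

definition Kb1 :: "'a::comm_ring_1 set \<Rightarrow> 'a poly \<Rightarrow> bool" where
  "Kb1 K q \<longleftrightarrow> (\<forall>i. coeff q i \<in> K)"

lemma Kb1_0: "subr K \<Longrightarrow> Kb1 K 0" by (simp add: Kb1_def subr_0)
lemma Kb1_const: "subr K \<Longrightarrow> c \<in> K \<Longrightarrow> Kb1 K [:c:]"
  by (simp add: Kb1_def coeff_pCons subr_0 split: nat.split)
lemma Kb1_1: "subr K \<Longrightarrow> Kb1 K 1"
  by (simp add: one_pCons Kb1_const subr_1)
lemma Kb1_pCons: "Kb1 K (pCons c q) \<longleftrightarrow> c \<in> K \<and> Kb1 K q"
  unfolding Kb1_def by (metis coeff_pCons_0 coeff_pCons_Suc not0_implies_Suc)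
lemma Kb1_add: "subr K \<Longrightarrow> Kb1 K p \<Longrightarrow> Kb1 K q \<Longrightarrow> Kb1 K (p + q)"
  by (simp add: Kb1_def subr_add)
lemma Kb1_neg: "subr K \<Longrightarrow> Kb1 K p \<Longrightarrow> Kb1 K (- p)"
  by (simp add: Kb1_def subr_neg)
lemma Kb1_diff: "subr K \<Longrightarrow> Kb1 K p \<Longrightarrow> Kb1 K q \<Longrightarrow> Kb1 K (p - q)"
  using Kb1_add[of K p "-q"] Kb1_neg by fastforce
lemma Kb1_mult: "subr K \<Longrightarrow> Kb1 K p \<Longrightarrow> Kb1 K q \<Longrightarrow> Kb1 K (p * q)"
  by (simp add: Kb1_def coeff_mult subr_sum subr_mult)
lemma Kb1_pow: "subr K \<Longrightarrow> Kb1 K p \<Longrightarrow> Kb1 K (p ^ n)"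
  by (induct n) (simp_all add: Kb1_1 Kb1_mult)
lemma Kb1_monom: "subr K \<Longrightarrow> c \<in> K \<Longrightarrow> Kb1 K (monom c n)"
  by (simp add: Kb1_def coeff_monom subr_0)
lemma Kb1_sum: "subr K \<Longrightarrow> (\<And>x. x \<in> A \<Longrightarrow> Kb1 K (f x)) \<Longrightarrow> Kb1 K (sum f A)"
  by (induct A rule: infinite_finite_induct) (simp_all add: Kb1_0 Kb1_add)

definition Kb :: "'a::comm_ring_1 set \<Rightarrow> 'a poly poly \<Rightarrow> bool" where
  "Kb K p \<longleftrightarrow> (\<forall>i. Kb1 K (coeff p i))"

lemma Kb_0: "subr K \<Longrightarrow> Kb K 0" by (simp add: Kb_def Kb1_0)
lemma Kb_const: "subr K \<Longrightarrow> Kb1 K c \<Longrightarrow> Kb K [:c:]"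
  by (simp add: Kb_def coeff_pCons Kb1_0 split: nat.split)
lemma Kb_1: "subr K \<Longrightarrow> Kb K 1"
  by (auto simp: Kb_def coeff_1 Kb1_1 Kb1_0)
lemma Kb_pCons: "Kb K (pCons c q) \<longleftrightarrow> Kb1 K c \<and> Kb K q"
  unfolding Kb_def by (metis coeff_pCons_0 coeff_pCons_Suc not0_implies_Suc)
lemma Kb_add: "subr K \<Longrightarrow> Kb K p \<Longrightarrow> Kb K q \<Longrightarrow> Kb K (p + q)"
  by (simp add: Kb_def Kb1_add)
lemma Kb_neg: "subr K \<Longrightarrow> Kb K p \<Longrightarrow> Kb K (- p)"
  by (simp add: Kb_def Kb1_neg)
lemma Kb_diff: "subr K \<Longrightarrow> Kb K p \<Longrightarrow> Kb K q \<Longrightarrow> Kb K (p - q)"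
  by (simp add: Kb_def Kb1_diff)
lemma Kb_mult: "subr K \<Longrightarrow> Kb K p \<Longrightarrow> Kb K q \<Longrightarrow> Kb K (p * q)"
  by (simp add: Kb_def coeff_mult Kb1_sum Kb1_mult)
lemma Kb_pow: "subr K \<Longrightarrow> Kb K p \<Longrightarrow> Kb K (p ^ n)"
  by (induct n) (simp_all add: Kb_1 Kb_mult)
lemma Kb_monom: "subr K \<Longrightarrow> Kb1 K c \<Longrightarrow> Kb K (monom c n)"
  by (simp add: Kb_def coeff_monom Kb1_0)
lemma Kb_X: "subr K \<Longrightarrow> Kb K [:[:0,1:]:]"
  by (simp add: Kb_const Kb1_pCons subr_0 subr_1 Kb1_0)
lemma Kb_Y: "subr K \<Longrightarrow> Kb K [:0,1:]"
  by (simp add: Kb_pCons Kb1_0 Kb1_1 Kb_0)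

lemma evalP_in:
  assumes "const2 ` K \<subseteq> ring_gen G" "u \<in> ring_gen G" "Kb1 K q"
  shows "evalP q u \<in> ring_gen G"
  using assms(3)
proof (induct q)
  case 0 then show ?case by (simp add: rg_0)
next
  case (pCons c q)
  then show ?case using assms(1,2)
    by (auto simp: evalP_pCons Kb1_pCons intro!: ring_gen.add ring_gen.mult)
qed

lemma ev2_in:
  assumes "const2 ` K \<subseteq> ring_gen G" "u \<in> ring_gen G" "v \<in> ring_gen G" "Kb K p"
  shows "ev2 p u v \<in> ring_gen G"
  using assms(4)
proof (induct p)
  case 0 then show ?case by (simp add: rg_0)
next
  case (pCons c q)
  then have "evalP c u \<in> ring_gen G" "ev2 q u v \<in> ring_gen G"
    using evalP_in[OF assms(1,2)] by (auto simp: Kb_pCons)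
  then show ?case using assms(3)
    by (auto simp: ev2_pCons intro!: ring_gen.add ring_gen.mult)
qed




definition indep :: "'k::field ratfun2 \<Rightarrow> 'k ratfun2 \<Rightarrow> bool" where
  "indep u v \<longleftrightarrow> (\<forall>p. ev2 p u v = 0 \<longrightarrow> p = 0)"

definition phi :: "'k::field ratfun2 \<Rightarrow> 'k ratfun2 \<Rightarrow> 'k ratfun2 \<Rightarrow> 'k ratfun2" where
  "phi u v x = (let r = (SOME r. snd r \<noteq> 0 \<and> x = Fract (fst r) (snd r))
                in ev2 (fst r) u v / ev2 (snd r) u v)"

lemma indep_nz: assumes "indep u v" shows "u \<noteq> 0" "v \<noteq> 0"
proof -
  show "u \<noteq> 0" using assms unfolding indep_def
    by (metis ev2_X pCons_eq_0_iff zero_neq_one)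
  show "v \<noteq> 0" using assms unfolding indep_def
    by (metis ev2_Y pCons_eq_0_iff zero_neq_one)
qed

lemma indep_ev2_nz: "indep u v \<Longrightarrow> q \<noteq> 0 \<Longrightarrow> ev2 q u v \<noteq> 0"
  unfolding indep_def by blast

lemma phi_welldef:
  assumes ind: "indep u v" and b: "b \<noteq> 0" and x: "x = Fract a b"
  shows "phi u v x = ev2 a u v / ev2 b u v"
proof -
  define r where "r = (SOME r. snd r \<noteq> 0 \<and> x = Fract (fst r) (snd r))"
  have "\<exists>r. snd r \<noteq> 0 \<and> x = Fract (fst r) (snd r)"
    using b x by (intro exI[of _ "(a,b)"]) simp
  then have r: "snd r \<noteq> 0 \<and> x = Fract (fst r) (snd r)"
    unfolding r_def by (rule someI_ex)
  then have "a * snd r = fst r * b" using b x eq_fract(1)[of b "snd r" a "fst r"] by simp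
  then have "ev2 a u v * ev2 (snd r) u v = ev2 (fst r) u v * ev2 b u v" by (metis ev2_mult)
  moreover have "ev2 b u v \<noteq> 0" "ev2 (snd r) u v \<noteq> 0"
    using ind b r by (auto simp: indep_ev2_nz)
  ultimately have "ev2 (fst r) u v / ev2 (snd r) u v = ev2 a u v / ev2 b u v"
    by (simp add: field_simps)
  moreover have "phi u v x = ev2 (fst r) u v / ev2 (snd r) u v"
    unfolding phi_def r_def Let_def ..
  ultimately show ?thesis by simp
qed

lemma phi_Fract:
  assumes ind: "indep u v"
  shows "phi u v (Fract p q) = ev2 p u v / ev2 q u v"
proof (cases "q = 0")
  case True
  have "Fract p q = Fract 0 1" using True by (simp add: eq_fract)
  then show ?thesis using phi_welldef[OF ind, of 1 "Fract p q" 0] True by simp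
next
  case False
  then show ?thesis using phi_welldef[OF ind False] by simp
qed

lemma phi_iota: "indep u v \<Longrightarrow> phi u v (iota p) = ev2 p u v"
  by (simp add: iota_def phi_Fract)

lemma phi_add:
  assumes "indep u v" shows "phi u v (x + y) = phi u v x + phi u v y"
proof -
  obtain a b where x: "x = Fract a b" "b \<noteq> 0" by (cases x)
  obtain c d where y: "y = Fract c d" "d \<noteq> 0" by (cases y)
  have "ev2 b u v \<noteq> 0" "ev2 d u v \<noteq> 0" using assms x y by (auto simp: indep_ev2_nz)
  then show ?thesis using x y assms
    by (simp add: phi_Fract ev2_add ev2_mult field_simps)
qed

lemma phi_mult:
  assumes "indep u v" shows "phi u v (x * y) = phi u v x * phi u v y"
proof -
  obtain a b where x: "x = Fract a b" "b \<noteq> 0" by (cases x)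
  obtain c d where y: "y = Fract c d" "d \<noteq> 0" by (cases y)
  show ?thesis using x y assms
    by (simp add: phi_Fract ev2_mult)
qed

lemma phi_minus:
  assumes "indep u v" shows "phi u v (- x) = - phi u v x"
proof -
  obtain a b where x: "x = Fract a b" "b \<noteq> 0" by (cases x)
  show ?thesis using x assms
    by (simp add: phi_Fract ev2_minus)
qed

lemma phi_inverse:
  assumes "indep u v" shows "phi u v (inverse x) = inverse (phi u v x)"
proof -
  obtain a b where x: "x = Fract a b" "b \<noteq> 0" by (cases x)
  show ?thesis using x assms
    by (simp add: phi_Fract)
qed

lemma phi_1: "indep u v \<Longrightarrow> phi u v 1 = 1"
  using phi_iota[of u v 1] by (simp add: iota_1)
lemma phi_0: "indep u v \<Longrightarrow> phi u v 0 = 0"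
  using phi_iota[of u v 0] by (simp add: iota_0)
lemma phi_diff: "indep u v \<Longrightarrow> phi u v (x - y) = phi u v x - phi u v y"
  by (metis diff_conv_add_uminus phi_add phi_minus)
lemma phi_divide: "indep u v \<Longrightarrow> phi u v (x / y) = phi u v x / phi u v y"
  by (metis divide_inverse phi_mult phi_inverse)
lemma phi_pow: "indep u v \<Longrightarrow> phi u v (x ^ n) = phi u v x ^ n"
  by (induct n) (simp_all add: phi_1 phi_mult)
lemma phi_const2: "indep u v \<Longrightarrow> phi u v (const2 c) = const2 c"
  by (metis const2_iota ev2_const evalP_const phi_iota)
lemma phi_X1: "indep u v \<Longrightarrow> phi u v X1 = u"
  by (simp add: X1_iota phi_iota)
lemma phi_X2: "indep u v \<Longrightarrow> phi u v X2 = v"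
  by (simp add: X2_iota phi_iota)

lemma phi_evalP: "indep u v \<Longrightarrow> phi u v (evalP q x) = evalP q (phi u v x)"
  by (induct q) (simp_all add: evalP_pCons phi_0 phi_add phi_mult phi_const2)

lemma phi_ev2: "indep u v \<Longrightarrow> phi u v (ev2 p x y) = ev2 p (phi u v x) (phi u v y)"
  by (induct p) (simp_all add: ev2_pCons phi_0 phi_add phi_mult phi_evalP)

lemma phi_inj: assumes "indep u v" "phi u v x = phi u v y" shows "x = y"
proof -
  obtain a b where x: "x - y = Fract a b" "b \<noteq> 0" by (cases "x - y")
  have "phi u v (x - y) = 0" using assms by (simp add: phi_diff)
  then have "ev2 a u v = 0" using x assms(1) by (simp add: phi_Fract indep_ev2_nz)
  then have "a = 0" using assms(1) by (simp add: indep_def)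
  then show ?thesis using x by (simp add: fract_collapse)
qed

lemma indep_X1X2: "indep X1 X2"
  by (simp add: indep_def ev2_X1X2 iota_eq0)

lemma indep_image:
  assumes "indep u v" "indep a b" shows "indep (phi u v a) (phi u v b)"
  unfolding indep_def
proof (intro allI impI)
  fix p assume "ev2 p (phi u v a) (phi u v b) = 0"
  then have "phi u v (ev2 p a b) = phi u v 0" using assms by (simp add: phi_ev2 phi_0)
  then have "ev2 p a b = 0" using phi_inj[OF assms(1)] by blast
  then show "p = 0" using assms(2) by (simp add: indep_def)
qed

lemma phi_comp:
  assumes "indep u v" "indep a b" "phi a b u = X1" "phi a b v = X2"
  shows "phi a b (phi u v x) = x"
proof -
  obtain p q where x: "x = Fract p q" "q \<noteq> 0" by (cases x)
  have "phi u v x = ev2 p u v / ev2 q u v" by (simp add: x phi_Fract assms(1))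
  then have "phi a b (phi u v x) = ev2 p X1 X2 / ev2 q X1 X2"
    using assms by (simp add: phi_divide phi_ev2)
  then show ?thesis using x by (simp add: ev2_X1X2 Fract_iota)
qed

lemma indep_swap_gen:
  fixes u v :: "'k::field ratfun2"
  assumes a1: "indep (X2::'k ratfun2) X1" and a2: "indep u v"
  shows "indep v u"
proof -
  have "indep (phi u v X2) (phi u v X1)" by (rule indep_image[OF a2 a1])
  then show "indep v u" using a2 by (simp only: phi_X1 phi_X2)
qed

lemma phi_rg_image:
  assumes "indep u v"
  shows "phi u v ` ring_gen S \<subseteq> ring_gen (phi u v ` S)"
  by (rule rg_image) (simp_all add: assms phi_1 phi_add phi_minus phi_mult)

lemma phi_rg_preimage:
  assumes "indep u v"
  shows "ring_gen (phi u v ` S) \<subseteq> phi u v ` ring_gen S"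
  by (rule rg_preimage) (simp_all add: assms phi_1 phi_add phi_minus phi_mult)




lemma poly_sum_le:
  fixes x :: "'a::comm_ring_1"
  assumes "degree p \<le> D" shows "poly p x = (\<Sum>i\<le>D. coeff p i * x ^ i)"
proof -
  have "poly p x = (\<Sum>i\<le>degree p. coeff p i * x ^ i)" by (rule poly_altdef)
  also have "\<dots> = (\<Sum>i\<le>D. coeff p i * x ^ i)"
    by (rule sum.mono_neutral_left) (use assms in \<open>auto simp: coeff_eq_0\<close>)
  finally show ?thesis .
qed

lemma degree_map_poly_le: "f 0 = 0 \<Longrightarrow> degree (map_poly f p) \<le> degree p"
  by (rule degree_le) (simp add: coeff_map_poly coeff_eq_0)

lemma ev2_sum:
  assumes "degree g \<le> D" shows "ev2 g u v = (\<Sum>j\<le>D. evalP (coeff g j) u * v ^ j)"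
proof -
  have "degree (map_poly (\<lambda>q. evalP q u) g) \<le> D"
    using degree_map_poly_le[of "\<lambda>q. evalP q u" g] assms by simp
  then show ?thesis by (simp add: ev2_def poly_sum_le coeff_map_poly)
qed

subsection \<open>Swap of variables\<close>

definition emb :: "'k::field poly \<Rightarrow> 'k poly poly" where
  "emb q = map_poly (\<lambda>c. [:c:]) q"

lemma emb_pCons: "emb (pCons c q) = pCons [:c:] (emb q)"
  by (simp add: emb_def map_poly_pCons)

lemma evalP_X2: "evalP q X2 = iota (emb q)"
proof (induct q)
  case 0 then show ?case by (simp add: iota_0 emb_def)
next
  case (pCons c q)
  have e: "emb (pCons c q) = [:[:c:]:] + [:0,1:] * emb q" by (simp add: emb_pCons)
  show ?case using pCons by (simp add: evalP_pCons const2_iota X2_iota) (metis e iota_add iota_mult)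
qed

definition sw :: "'k::field poly poly \<Rightarrow> 'k poly poly" where
  "sw p = poly (map_poly emb p) [:[:0,1:]:]"

lemma emb_0: "emb 0 = 0" by (simp add: emb_def)

lemma sw_pCons: "sw (pCons q p) = emb q + [:[:0,1:]:] * sw p"
  by (simp add: sw_def map_poly_pCons emb_0)

lemma ev2_X2X1: "ev2 p X2 X1 = iota (sw p)"
proof (induct p)
  case 0 then show ?case by (simp add: iota_0 sw_def)
next
  case (pCons q p)
  show ?case using pCons by (simp only: ev2_pCons sw_pCons evalP_X2 X1_iota iota_add iota_mult)
qed

lemma coeff_emb: "coeff (coeff (emb q) i) j = (if j = 0 then coeff q i else 0)"
  by (simp add: emb_def coeff_map_poly coeff_pCons split: nat.split)

lemma coeff_sw: "coeff (coeff (sw p) i) j = coeff (coeff p j) i"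
proof (induct p arbitrary: j)
  case 0 then show ?case by (simp add: sw_def)
next
  case (pCons q p)
  have "coeff (coeff ([:[:0,1:]:] * sw p) i) j = coeff (pCons 0 (coeff (sw p) i)) j"
    by simp
  then show ?case using pCons
    by (cases j) (simp_all add: sw_pCons coeff_emb)
qed

lemma indep_X2X1: "indep X2 X1"
  unfolding indep_def
proof (intro allI impI)
  fix p assume "ev2 p X2 X1 = 0"
  then have "sw p = 0" by (simp add: ev2_X2X1 iota_eq0)
  then have "coeff (coeff p j) i = 0" for i j using coeff_sw[of p i j] by simp
  then show "p = 0" by (simp add: poly_eq_iff)
qed

lemma indep_swap: "indep u v \<Longrightarrow> indep v u"
  by (rule indep_swap_gen[OF indep_X2X1])

subsection \<open>The substitution X2 := P(X1)/X2\<close>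

definition RD :: "'k::field poly \<Rightarrow> 'k poly poly \<Rightarrow> nat \<Rightarrow> 'k poly poly" where
  "RD P g D = (\<Sum>j\<le>D. monom (coeff g j * P ^ j) (D - j))"

lemma coeff_RD: "coeff (RD P g D) k = (if k \<le> D then coeff g (D - k) * P ^ (D - k) else 0)"
proof -
  have "coeff (RD P g D) k = (\<Sum>j\<le>D. if D - j = k then coeff g j * P ^ j else 0)"
    by (simp add: RD_def coeff_sum coeff_monom)
  also have "\<dots> = (\<Sum>j\<le>D. if j = D - k then (if k \<le> D then coeff g j * P ^ j else 0) else 0)"
    by (rule sum.cong) auto
  finally show ?thesis by (simp add: sum.delta)
qed

lemma X2_nz: "X2 \<noteq> 0" by (simp add: X2_iota iota_eq0)
lemma X1_nz: "X1 \<noteq> 0" by (simp add: X1_iota iota_eq0)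

lemma iota_monom: "iota (monom c n) = iota [:c:] * X2 ^ n"
  by (simp add: monom_altdef X2_iota iota_mult[symmetric] iota_pow[symmetric])

lemma iota_sum: "iota (sum f A) = (\<Sum>x\<in>A. iota (f x))"
  using sum_hom[of iota f A] by (simp add: iota_0 iota_add o_def)

lemma const_mult_poly: "[:a * b:] = [:a:] * [:b:]" by (simp add: mult.commute)
lemma const_pow_poly: "[:a ^ n:] = [:a:] ^ n"
proof (induct n)
  case 0 show ?case by (simp add: one_pCons)
next
  case (Suc n) then show ?case by (metis const_mult_poly power_Suc)
qed

lemma ev2_RD:
  fixes P :: "'k::field poly"
  assumes "degree g \<le> D"
  shows "ev2 g X1 (evalP P X1 / X2) * X2 ^ D = iota (RD P g D)"
proof -
  have "ev2 g X1 (evalP P X1 / X2) * X2 ^ D =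
      (\<Sum>j\<le>D. evalP (coeff g j) X1 * (evalP P X1 / X2) ^ j * X2 ^ D)"
    by (simp add: ev2_sum[OF assms] sum_distrib_right)
  also have "\<dots> = (\<Sum>j\<le>D. iota (monom (coeff g j * P ^ j) (D - j)))"
  proof (rule sum.cong)
    fix j assume "j \<in> {..D}"
    then have jD: "j \<le> D" by simp
    have "(evalP P X1 / X2) ^ j * X2 ^ D = evalP P X1 ^ j * X2 ^ (D - j)"
    proof -
      have e: "X2 ^ D = X2 ^ j * X2 ^ (D - j)" using jD by (simp add: power_add[symmetric])
      have nz: "(X2::'k ratfun2) ^ j \<noteq> 0" by (simp add: X2_nz)
      have "(evalP P X1 / X2) ^ j * X2 ^ D = (evalP P X1 ^ j / X2 ^ j) * (X2 ^ j * X2 ^ (D - j))"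
        by (simp only: e power_divide)
      also have "\<dots> = evalP P X1 ^ j * X2 ^ (D - j)" using nz by (simp add: X2_nz)
      finally show ?thesis .
    qed
    moreover have "iota (monom (coeff g j * P ^ j) (D - j)) =
        evalP (coeff g j) X1 * evalP P X1 ^ j * X2 ^ (D - j)"
      by (simp only: iota_monom evalP_X1 const_mult_poly const_pow_poly iota_mult iota_pow)
    ultimately show "evalP (coeff g j) X1 * (evalP P X1 / X2) ^ j * X2 ^ D =
        iota (monom (coeff g j * P ^ j) (D - j))"
      by (simp add: mult.assoc)
  qed simp
  also have "\<dots> = iota (RD P g D)" by (simp add: RD_def iota_sum)
  finally show ?thesis .
qed

lemma indep_X1_B:
  assumes "P \<noteq> 0" shows "indep X1 (evalP P X1 / X2)"
  unfolding indep_def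
proof (intro allI impI)
  fix g assume "ev2 g X1 (evalP P X1 / X2) = 0"
  then have "iota (RD P g (degree g)) = 0" using ev2_RD[of g "degree g" P] by simp
  then have "RD P g (degree g) = 0" by (simp add: iota_eq0)
  then have "coeff g j = 0" if "j \<le> degree g" for j
    using coeff_RD[of P g "degree g" "degree g - j"] that assms by simp
  then show "g = 0" by (metis le_degree leading_coeff_0_iff order_refl)
qed

lemma indep_fwd:
  fixes Q :: "'k::field poly"
  assumes "indep a b" "Q \<noteq> 0" shows "indep b (evalP Q b / a)"
proof -
  have i0: "indep (phi X2 X1 X1) (phi X2 X1 (evalP Q X1 / X2))"
    by (rule indep_image[OF indep_X2X1 indep_X1_B[OF assms(2)]])
  have "phi X2 X1 X1 = (X2::'k ratfun2)" "phi X2 X1 (evalP Q X1 / X2) = evalP Q X2 / X1"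
    by (simp_all add: indep_X2X1 phi_X1 phi_X2 phi_divide phi_evalP)
  then have i1: "indep X2 (evalP Q X2 / X1)" using i0 by simp
  show ?thesis
    using indep_image[OF assms(1) i1] assms(1)
    by (simp add: phi_X1 phi_X2 phi_divide phi_evalP)
qed

lemma indep_bwd:
  assumes "indep a b" "P \<noteq> 0" shows "indep (evalP P a / b) a"
proof -
  have i1: "indep (evalP P X1 / X2) X1"
    using indep_swap[OF indep_X1_B[OF assms(2)]] .
  show ?thesis
    using indep_image[OF assms(1) i1] assms(1)
    by (simp add: phi_X1 phi_X2 phi_divide phi_evalP)
qed




subsection \<open>Abstract Laurent computations\<close>

definition LL :: "'k::field set \<Rightarrow> 'k ratfun2 \<Rightarrow> 'k ratfun2 \<Rightarrow> 'k ratfun2 set" where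
  "LL K u v = ring_gen (const2 ` K \<union> {u, inverse u, v, inverse v})"

lemma LL_sym: "LL K u v = LL K v u"
  unfolding LL_def by (simp add: insert_commute)

lemma LL_C: "const2 ` K \<subseteq> LL K u v"
  unfolding LL_def by (auto intro: ring_gen.gen)
lemma LL_gens: "u \<in> LL K u v" "inverse u \<in> LL K u v" "v \<in> LL K u v" "inverse v \<in> LL K u v"
  unfolding LL_def by (auto intro: ring_gen.gen)

lemma evalP_shift:
  assumes "const2 ` K \<subseteq> ring_gen G" "w \<in> ring_gen G" "z \<in> ring_gen G" "Kb1 K Q"
  shows "\<exists>t\<in>ring_gen G. evalP Q (w + z) = evalP Q w + z * t"
  using assms(4)
proof (induct Q)
  case 0 then show ?case using rg_0 by force
next
  case (pCons c Q)
  then have "Kb1 K Q" by (simp add: Kb1_pCons)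
  with pCons obtain t where t: "t \<in> ring_gen G" "evalP Q (w + z) = evalP Q w + z * t" by blast
  have eQ: "evalP Q w \<in> ring_gen G" by (rule evalP_in[OF assms(1,2) \<open>Kb1 K Q\<close>])
  define t' where "t' = evalP Q w + (w + z) * t"
  have "t' \<in> ring_gen G" unfolding t'_def
    using eQ t(1) assms(2,3) by (intro ring_gen.add ring_gen.mult) auto
  moreover have "evalP (pCons c Q) (w + z) = evalP (pCons c Q) w + z * t'"
    by (simp add: evalP_pCons t(2) t'_def algebra_simps)
  ultimately show ?case by blast
qed

lemma palin_eval:
  fixes Q :: "'k::field poly"
  assumes "palindromic Q" "v \<noteq> 0"
  shows "evalP Q v = v ^ degree Q * evalP Q (inverse v)"
proof -
  define M where "M = map_poly const2 Q"
  have dM: "degree M = degree Q" unfolding M_def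
    by (rule degree_map_poly) (metis const2_0 const2_inj)
  have "reflect_poly M = M"
  proof (rule poly_eqI)
    fix n
    show "coeff (reflect_poly M) n = coeff M n"
    proof (cases "n \<le> degree Q")
      case True
      then have "coeff Q (degree Q - n) = coeff Q n"
        using assms(1) unfolding palindromic_def by metis
      then show ?thesis unfolding coeff_reflect_poly dM using True by (simp add: M_def coeff_map_poly)
    next
      case False
      then show ?thesis unfolding coeff_reflect_poly dM by (simp add: M_def coeff_map_poly coeff_eq_0)
    qed
  qed
  then have "poly M v = v ^ degree M * poly M (inverse v)"
    using poly_reflect_poly_nz[OF assms(2), of M] by simp
  then have "poly M v = v ^ degree Q * poly M (inverse v)" by (simp only: dM)
  then show ?thesis unfolding evalP_def M_def .
qed

lemma LL_mult: "a \<in> LL K u v \<Longrightarrow> b \<in> LL K u v \<Longrightarrow> a * b \<in> LL K u v"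
  unfolding LL_def by (rule ring_gen.mult)
lemma LL_add: "a \<in> LL K u v \<Longrightarrow> b \<in> LL K u v \<Longrightarrow> a + b \<in> LL K u v"
  unfolding LL_def by (rule ring_gen.add)
lemma LL_evalP: "a \<in> LL K u v \<Longrightarrow> Kb1 K Q \<Longrightarrow> evalP Q a \<in> LL K u v"
  unfolding LL_def by (rule evalP_in) (auto intro: ring_gen.gen)
lemma LL_pow: "a \<in> LL K u v \<Longrightarrow> a ^ n \<in> LL K u v"
  unfolding LL_def by (rule rg_pow)

lemma lau1:
  assumes "u \<noteq> 0" "c * u = evalP Q v" "Kb1 K Q"
  shows "c \<in> LL K u v"
proof -
  have "c = evalP Q v * inverse u" using assms(1,2) by (simp add: field_simps)
  then show ?thesis using LL_mult[OF LL_evalP[OF LL_gens(3) assms(3)] LL_gens(2)] by simp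
qed

lemma lau2:
  assumes "u \<noteq> 0" "v \<noteq> 0" "c * u = evalP Q v" "d * v = evalP P c" "Kb1 K Q" "Kb1 K P"
  shows "d \<in> LL K u v"
proof -
  have c: "c \<in> LL K u v" by (rule lau1[OF assms(1,3,5)])
  have "d = evalP P c * inverse v" using assms(2,4) by (simp add: field_simps)
  then show ?thesis using LL_mult[OF LL_evalP[OF c assms(6)] LL_gens(4)] by simp
qed

lemma lau3:
  assumes K: "subr K"
    and nz: "u \<noteq> 0" "v \<noteq> 0" "c \<noteq> 0"
    and r: "c * u = evalP Q v" "d * v = evalP P c" "e * c = evalP Q d"
    and kb: "Kb1 K Q" "Kb1 K P"
    and c0: "coeff P 0 = 1" and pal: "palindromic Q"
  shows "e \<in> LL K u v"
proof -
  let ?L = "LL K u v"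
  have CL: "const2 ` K \<subseteq> ring_gen (const2 ` K \<union> {u, inverse u, v, inverse v})"
    using LL_C unfolding LL_def .
  have c: "c \<in> ?L" by (rule lau1[OF nz(1) r(1) kb(1)])
  obtain P1 where P: "P = pCons 1 P1" using c0 by (metis coeff_pCons_0 pCons_cases)
  then have kP1: "Kb1 K P1" using kb(2) by (simp add: Kb1_pCons)
  define W1 where "W1 = evalP P1 c"
  have W1: "W1 \<in> ?L" unfolding W1_def by (rule LL_evalP[OF c kP1])
  have ePc: "evalP P c = 1 + c * W1" by (simp add: P evalP_pCons W1_def)
  define Z where "Z = inverse u * W1 * inverse v"
  have Z: "Z \<in> ?L" unfolding Z_def using W1 LL_gens by (intro LL_mult) auto
  have cdef: "c = evalP Q v * inverse u" using nz(1) r(1) by (simp add: field_simps)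
  have d: "d = inverse v + evalP Q v * Z"
  proof -
    have "d = evalP P c * inverse v" using nz(2) r(2) by (simp add: field_simps)
    also have "\<dots> = inverse v + c * W1 * inverse v" by (simp add: ePc algebra_simps)
    also have "\<dots> = inverse v + evalP Q v * Z" by (simp add: cdef Z_def algebra_simps)
    finally show ?thesis .
  qed
  have zz: "evalP Q v * Z \<in> ?L"
    by (rule LL_mult[OF LL_evalP[OF LL_gens(3) kb(1)] Z])
  obtain t where t: "t \<in> ring_gen (const2 ` K \<union> {u, inverse u, v, inverse v})"
      "evalP Q d = evalP Q (inverse v) + evalP Q v * Z * t"
    using evalP_shift[OF CL _ _ kb(1), of "inverse v" "evalP Q v * Z"] LL_gens(4) zz d
    unfolding LL_def by auto
  have t1: "t \<in> ?L" using t(1) unfolding LL_def .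
  have inv: "evalP Q (inverse v) = evalP Q v * inverse v ^ degree Q"
    using palin_eval[OF pal nz(2)] nz(2) by (simp add: field_simps power_inverse)
  have "e * c = c * (u * (inverse v ^ degree Q + Z * t))"
    using r(3) t(2) inv by (simp add: r(1)[symmetric] algebra_simps)
  then have e: "e = u * (inverse v ^ degree Q + Z * t)" using nz(3) by simp
  show ?thesis unfolding e
    by (intro LL_mult LL_add LL_pow LL_gens Z t1)
qed




lemma yS_pow_monom: "[:0,1:] ^ n = monom 1 n"
  by (simp add: monom_altdef)

lemma cmm: "coeff (p * monom 1 n) (k + n) = coeff (p :: 'a::comm_ring_1 poly) k"
proof -
  have e: "p * monom 1 n = monom 1 n * p" by (rule mult.commute)
  show ?thesis by (subst e) (simp add: coeff_monom_mult)
qed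

lemma coeff_shape:
  "coeff (a * [:c:] * [:0,1:] ^ n) (k + n) = coeff (a :: 'a::comm_ring_1 poly) k * c"
proof -
  have e: "a * [:c:] * [:0,1:] ^ n = monom 1 n * (a * [:c:])"
    by (metis mult.commute yS_pow_monom)
  show ?thesis unfolding e by (simp add: coeff_monom_mult cmm mult.commute)
qed

lemma xS_nz: "([:[:0,1:]:] :: 'k::field poly poly) \<noteq> 0" by simp
lemma yS_nz: "([:0,1:] :: 'k::field poly poly) \<noteq> 0" by simp

lemma X1_pow: "X1 ^ n = iota ([:[:0,1:]:] ^ n)" by (simp add: X1_iota iota_pow)
lemma X2_pow: "X2 ^ n = iota ([:0,1:] ^ n)" by (simp add: X2_iota iota_pow)

subsection \<open>Characterisation of the base Laurent ring\<close>

lemma LL_base: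
  fixes x :: "'k::field ratfun2"
  assumes K: "subr K" and x: "x \<in> LL K X1 X2"
  shows "\<exists>p N. Kb K p \<and> x = iota p / (X1 * X2) ^ N"
proof -
  let ?R = "{x. \<exists>p N. Kb K p \<and> x = iota p / ((X1::'k ratfun2) * X2) ^ N}"
  have D: "X1 * X2 = iota ([:[:0,1:]:] * [:0,1:])" by (simp only: X1_iota X2_iota iota_mult)
  have Dnz: "(X1 * X2 :: 'k ratfun2) ^ n \<noteq> 0" for n by (simp add: X1_nz X2_nz)
  have "LL K X1 X2 \<subseteq> ?R" unfolding LL_def
  proof (rule rg_least)
    show "1 \<in> ?R" by (intro CollectI exI[of _ 1] exI[of _ 0]) (simp add: Kb_1 K iota_1)
  next
    have "const2 c \<in> ?R" if "c \<in> K" for c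
      using that
        by (intro CollectI exI[of _ "[:[:c:]:]"] exI[of _ 0])
           (simp add: const2_iota Kb_const Kb1_const K)
    moreover have "X1 \<in> ?R" by (intro CollectI exI[of _ "[:[:0,1:]:]"] exI[of _ 0]) (simp add: X1_iota Kb_X K)
    moreover have "X2 \<in> ?R" by (intro CollectI exI[of _ "[:0,1:]"] exI[of _ 0]) (simp add: X2_iota Kb_Y K)
    moreover have "inverse X1 \<in> ?R" by (intro CollectI exI[of _ "[:0,1:]"] exI[of _ 1])
          (simp add: X2_iota[symmetric] Kb_Y K X2_nz field_simps)
    moreover have "inverse X2 \<in> ?R" by (intro CollectI exI[of _ "[:[:0,1:]:]"] exI[of _ 1])
          (simp add: X1_iota[symmetric] Kb_X K X1_nz field_simps)
    ultimately show "const2 ` K \<union> {X1, inverse X1, X2, inverse X2} \<subseteq> ?R" by blast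
  next
    fix a b assume "a \<in> ?R" "b \<in> ?R"
    then obtain p N q M where pq: "Kb K p" "a = iota p / (X1 * X2) ^ N" "Kb K q" "b = iota q / (X1 * X2) ^ M"
      by blast
    define d where "d = [:[:0,1:]:] * ([:0,1:] :: 'k poly poly)"
    have Kd: "Kb K d" unfolding d_def by (intro Kb_mult Kb_X Kb_Y K)
    have Dd: "X1 * X2 = iota d" using D unfolding d_def .
    have "a + b = (iota p * (X1 * X2) ^ M + iota q * (X1 * X2) ^ N) / (X1 * X2) ^ (N + M)"
      using Dnz[of N] Dnz[of M] by (simp add: pq field_simps power_add)
    also have "\<dots> = iota (p * d ^ M + q * d ^ N) / (X1 * X2) ^ (N + M)"
      by (simp only: Dd iota_add iota_mult iota_pow)
    finally have "a + b = iota (p * d ^ M + q * d ^ N) / (X1 * X2) ^ (N + M)" .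
    moreover have "Kb K (p * d ^ M + q * d ^ N)" using pq Kd K by (intro Kb_add Kb_mult Kb_pow) auto
    ultimately show "a + b \<in> ?R" by blast
    have "a * b = iota (p * q) / (X1 * X2) ^ (N + M)"
      by (simp add: pq iota_mult power_add)
    moreover have "Kb K (p * q)" using pq K by (intro Kb_mult) auto
    ultimately show "a * b \<in> ?R" by blast
  next
    fix a assume "a \<in> ?R"
    then obtain p N where p: "Kb K p" "a = iota p / (X1 * X2) ^ N" by blast
    then have "- a = iota (- p) / (X1 * X2) ^ N" by (simp add: iota_minus)
    moreover have "Kb K (- p)" using p K by (intro Kb_neg) auto
    ultimately show "- a \<in> ?R" by blast
  qed
  then show ?thesis using x by blast
qed

lemma phi_img_gens:
  assumes "indep u v"
  shows "phi u v ` (const2 ` K \<union> {a, inverse a, b, inverse b}) =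
    const2 ` K \<union> {phi u v a, inverse (phi u v a), phi u v b, inverse (phi u v b)}"
proof -
  have "phi u v ` const2 ` K = const2 ` K"
    using assms by (simp add: image_image phi_const2)
  then show ?thesis using assms by (simp add: image_Un phi_inverse)
qed

lemma LL_phi1:
  assumes "indep u v"
  shows "LL K (phi u v a) (phi u v b) \<subseteq> phi u v ` LL K a b"
  unfolding LL_def phi_img_gens[OF assms, symmetric] by (rule phi_rg_preimage[OF assms])

lemma LL_phi2:
  assumes "indep u v"
  shows "phi u v ` LL K a b \<subseteq> LL K (phi u v a) (phi u v b)"
  unfolding LL_def phi_img_gens[OF assms, symmetric] by (rule phi_rg_image[OF assms])

lemma Coef:
  fixes P :: "'k::field poly"
  assumes K: "subr K" and P0: "P \<noteq> 0" and g: "Kb K g"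
    and f: "iota g / (X1 ^ N * X2 ^ s) \<in> LL K (evalP P X1 / X2) X1"
  shows "\<exists>r M. Kb1 K r \<and> coeff g 0 * [:0,1:] ^ M = P ^ s * r * [:0,1:] ^ N"
proof -
  define B where "B = evalP P X1 / (X2::'k ratfun2)"
  define f where "f = iota g / (X1 ^ N * X2 ^ s)"
  have iB: "indep X1 B" unfolding B_def by (rule indep_X1_B[OF P0])
  have PX: "evalP P X1 = iota [:P:]" by (simp add: evalP_X1)
  have PXnz: "evalP P X1 \<noteq> 0" using P0 by (simp add: PX iota_eq0)
  have Bnz: "B \<noteq> 0" using PXnz by (simp add: B_def X2_nz)
  have p1: "phi X1 B X1 = X1" "phi X1 B X2 = B" using iB by (simp_all add: phi_X1 phi_X2)
  have "phi X1 B B = phi X1 B (evalP P X1) / phi X1 B X2"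
    by (metis B_def phi_divide iB)
  also have "\<dots> = evalP P X1 / B" using iB by (simp add: phi_evalP p1)
  also have "\<dots> = X2" using PXnz by (simp add: B_def X2_nz)
  finally have p2: "phi X1 B B = X2" .
  have inv: "phi X1 B (phi X1 B x) = x" for x by (rule phi_comp[OF iB iB p1(1) p2])
  have "f \<in> LL K B X1" using f unfolding f_def B_def .
  then have "f \<in> LL K (phi X1 B X2) (phi X1 B X1)" by (simp only: p1)
  then have "f \<in> phi X1 B ` LL K X2 X1" using LL_phi1[OF iB] by blast
  then obtain f0 where f0: "f0 \<in> LL K X2 X1" "f = phi X1 B f0" by blast
  then have "phi X1 B f \<in> LL K X1 X2" using inv LL_sym by metis
  then obtain h M where h: "Kb K h" "phi X1 B f = iota h / (X1 * X2) ^ M"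
    using LL_base[OF K] by blast
  define D where "D = degree g"
  have ev: "ev2 g X1 B * X2 ^ D = iota (RD P g D)"
    unfolding B_def D_def by (rule ev2_RD) simp
  have E: "ev2 g X1 B = iota (RD P g D) / X2 ^ D"
    using ev by (simp add: field_simps X2_nz)
  have Bs: "B ^ s = iota [:P:] ^ s / X2 ^ s" by (simp add: B_def PX power_divide)
  have "phi X1 B f = ev2 g X1 B / (X1 ^ N * B ^ s)"
    using iB by (simp add: f_def phi_divide phi_iota phi_mult phi_pow p1)
  also have "\<dots> = (iota (RD P g D) / X2 ^ D) / (X1 ^ N * (iota [:P:] ^ s / X2 ^ s))"
    by (simp only: E Bs)
  also have "\<dots> = (iota (RD P g D) * X2 ^ s) / (X2 ^ D * X1 ^ N * iota [:P:] ^ s)"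
    using PXnz PX by (simp add: field_simps X1_nz X2_nz)
  finally have eq1: "(iota (RD P g D) * X2 ^ s) / (X2 ^ D * X1 ^ N * iota [:P:] ^ s) = iota h / (X1 * X2) ^ M"
    using h(2) by simp
  have "iota (RD P g D) * X2 ^ s * (X1 * X2) ^ M = iota h * (X2 ^ D * X1 ^ N * iota [:P:] ^ s)"
    using eq1 PXnz PX by (simp add: frac_eq_eq X1_nz X2_nz)
  then have "iota (RD P g D * [:0,1:] ^ s * ([:[:0,1:]:] * [:0,1:]) ^ M) =
      iota (h * ([:0,1:] ^ D * [:[:0,1:]:] ^ N * [:P:] ^ s))"
    by (simp only: iota_mult iota_pow X1_iota X2_iota)
  then have peq: "RD P g D * [:0,1:] ^ s * ([:[:0,1:]:] * [:0,1:]) ^ M =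
      h * ([:0,1:] ^ D * [:[:0,1:]:] ^ N * [:P:] ^ s)" by (simp add: iota_eq)
  have l: "RD P g D * [:0,1:] ^ s * ([:[:0,1:]:] * [:0,1:]) ^ M =
      RD P g D * [:[:0,1:] ^ M:] * [:0,1:] ^ (s + M)"
    by (simp only: power_mult_distrib power_add const_pow_poly ac_simps)
  have r: "h * ([:0,1:] ^ D * [:[:0,1:]:] ^ N * [:P:] ^ s) =
      h * [:[:0,1:] ^ N * P ^ s:] * [:0,1:] ^ D"
    by (simp only: const_pow_poly const_mult_poly ac_simps)
  have "coeff (RD P g D * [:[:0,1:] ^ M:] * [:0,1:] ^ (s + M)) (D + (s + M)) =
      coeff (h * [:[:0,1:] ^ N * P ^ s:] * [:0,1:] ^ D) ((s + M) + D)"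
    using peq l r by (simp add: add.commute)
  then have "coeff (RD P g D) D * [:0,1:] ^ M = coeff h (s + M) * ([:0,1:] ^ N * P ^ s)"
    by (simp only: coeff_shape)
  then have "coeff g 0 * [:0,1:] ^ M = P ^ s * coeff h (s + M) * [:0,1:] ^ N"
    by (simp add: coeff_RD ac_simps)
  moreover have "Kb1 K (coeff h (s + M))" using h(1) by (simp add: Kb_def)
  ultimately show ?thesis by blast
qed




lemma LL_diff: "a \<in> LL K u v \<Longrightarrow> b \<in> LL K u v \<Longrightarrow> a - b \<in> LL K u v"
  unfolding LL_def by (rule rg_diff)

lemma pCons0_mult: "pCons 0 p = [:0,1:] * (p :: 'a::comm_ring_1 poly)" by simp

lemma divX:
  fixes Q :: "'k::field poly"
  assumes K: "subr K" and Q0: "coeff Q 0 = 1"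
  shows "\<forall>r. Kb1 K r \<longrightarrow> c * [:0,1:] ^ M = Q ^ s * r \<longrightarrow> (\<exists>e. Kb1 K e \<and> c = Q ^ s * e)"
proof (induct M)
  case 0 then show ?case by auto
next
  case (Suc M)
  show ?case
  proof (intro allI impI)
    fix r assume r: "Kb1 K r" "c * [:0,1:] ^ Suc M = Q ^ s * r"
    have z: "poly (c * [:0,1:] ^ Suc M) 0 = 0" by simp
    have pQ: "poly Q 0 = 1" by (simp add: poly_0_coeff_0 Q0)
    have "coeff r 0 = poly (Q ^ s * r) 0"
      by (simp only: poly_mult poly_power pQ) (simp add: poly_0_coeff_0)
    also have "\<dots> = 0" using z by (simp only: r(2)[symmetric])
    finally have "coeff r 0 = 0" .
    then obtain r' where r': "r = pCons 0 r'" by (metis coeff_pCons_0 pCons_cases)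
    then have kr': "Kb1 K r'" using r(1) by (simp add: Kb1_pCons)
    have "(c * [:0,1:] ^ M) * [:0,1:] = (Q ^ s * r') * [:0,1:]"
      using r(2) by (simp add: r' ac_simps)
    then have "c * [:0,1:] ^ M = Q ^ s * r'" by simp
    then show "\<exists>e. Kb1 K e \<and> c = Q ^ s * e" using Suc kr' by blast
  qed
qed

lemma LemI:
  fixes Q :: "'k::field poly"
  assumes K: "subr K" and kQ: "Kb1 K Q" and Q0: "coeff Q 0 = 1"
  shows "\<forall>p. Kb K p \<longrightarrow> iota p / X2 ^ s \<in> LL K (evalP Q X1 / X2) X1 \<longrightarrow>
     iota p / X2 ^ s \<in> ring_gen (const2 ` K \<union> {X1, X2, evalP Q X1 / X2})"
proof (induct s)
  let ?T = "ring_gen (const2 ` K \<union> {X1, X2, evalP Q X1 / (X2::'k ratfun2)})"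
  have CT: "const2 ` K \<subseteq> ?T" by (auto intro: ring_gen.gen)
  have X1T: "X1 \<in> ?T" "X2 \<in> ?T" by (auto intro: ring_gen.gen)
  case 0
  show ?case
  proof (intro allI impI)
    fix p :: "'k poly poly" assume "Kb K p"
    then have "ev2 p X1 X2 \<in> ?T" by (intro ev2_in[OF CT X1T]) 
    then show "iota p / X2 ^ 0 \<in> ?T" by (simp add: ev2_X1X2)
  qed
next
  let ?T = "ring_gen (const2 ` K \<union> {X1, X2, evalP Q X1 / (X2::'k ratfun2)})"
  let ?B = "evalP Q X1 / (X2::'k ratfun2)"
  have CT: "const2 ` K \<subseteq> ?T" by (auto intro: ring_gen.gen)
  have X1T: "X1 \<in> ?T" "?B \<in> ?T" by (auto intro: ring_gen.gen)
  case (Suc s)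
  show ?case
  proof (intro allI impI)
    fix p :: "'k poly poly" assume kp: "Kb K p" and f: "iota p / X2 ^ Suc s \<in> LL K ?B X1"
    have Q0': "Q \<noteq> 0" using Q0 by auto
    have "iota p / (X1 ^ 0 * X2 ^ Suc s) \<in> LL K ?B X1" using f by simp
    from Coef[OF K Q0' kp this] obtain r M where rM: "Kb1 K r"
      "coeff p 0 * [:0,1:] ^ M = Q ^ Suc s * r * [:0,1:] ^ 0" by blast
    obtain e where e: "Kb1 K e" "coeff p 0 = Q ^ Suc s * e"
      using divX[OF K Q0, of "coeff p 0" M "Suc s"] rM by auto
    obtain p'' where p'': "p = pCons (coeff p 0) p''" by (metis coeff_pCons_0 pCons_cases)
    then have kp'': "Kb K p''" using kp by (metis Kb_pCons)
    have pe: "p = [:coeff p 0:] + [:0,1:] * p''" by (subst p'') simp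
    have ip: "iota p = iota [:coeff p 0:] + X2 * iota p''" by (metis pe iota_add iota_mult X2_iota)
    have "iota p / X2 ^ Suc s = iota [:coeff p 0:] / X2 ^ Suc s + iota p'' / X2 ^ s"
      unfolding ip by (simp add: field_simps X2_nz)
    also have "iota [:coeff p 0:] = evalP (coeff p 0) X1" by (simp add: evalP_X1)
    also have "\<dots> = evalP e X1 * evalP Q X1 ^ Suc s" by (simp add: e(2) evalP_mult evalP_pow)
    finally have fe: "iota p / X2 ^ Suc s = evalP e X1 * ?B ^ Suc s + iota p'' / X2 ^ s"
      by (simp add: power_divide)
    have g1: "evalP e X1 * ?B ^ Suc s \<in> LL K ?B X1"
      by (intro LL_mult LL_pow LL_evalP[OF _ e(1)] LL_gens)
    have "iota p'' / X2 ^ s \<in> LL K ?B X1"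
      using LL_diff[OF f g1] fe by (simp add: algebra_simps)
    then have "iota p'' / X2 ^ s \<in> ?T" using Suc kp'' by blast
    moreover have "evalP e X1 * ?B ^ Suc s \<in> ?T"
      by (intro ring_gen.mult rg_pow evalP_in[OF CT _ e(1)] X1T)
    ultimately show "iota p / X2 ^ Suc s \<in> ?T" using fe by (simp add: ring_gen.add)
  qed
qed




lemma coeff0_pow: "coeff (p ^ n) 0 = coeff p 0 ^ (n::nat)"
  for p :: "'a::comm_ring_1 poly"
  by (induct n) (simp_all add: coeff_mult_0)

lemma Kb_emb: assumes "subr K" "Kb1 K Q" shows "Kb K (emb Q)"
  unfolding Kb_def
proof
  fix i
  have "coeff Q i \<in> K" using assms(2) by (simp add: Kb1_def)
  then show "Kb1 K (coeff (emb Q) i)" by (simp add: emb_def coeff_map_poly Kb1_const assms(1))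
qed

lemma embQ_pow:
  fixes Q :: "'k::field poly"
  assumes K: "subr K" and kQ: "Kb1 K Q" and Q0: "coeff Q 0 = 1"
  shows "\<exists>w. Kb K w \<and> emb Q ^ n = 1 + [:0,1:] * w"
proof -
  define t where "t = emb Q ^ n - 1"
  have kt: "Kb K t" unfolding t_def by (intro Kb_diff Kb_pow Kb_emb Kb_1 K kQ)
  have "coeff (emb Q) 0 = 1" by (simp add: emb_def coeff_map_poly Q0 one_pCons)
  then have "coeff t 0 = 0" by (simp add: t_def coeff0_pow)
  then obtain w where w: "t = pCons 0 w" by (metis coeff_pCons_0 pCons_cases)
  then have "Kb K w" using kt by (simp add: Kb_pCons)
  moreover have "emb Q ^ n = 1 + [:0,1:] * w" using w by (simp add: t_def algebra_simps)
  ultimately show ?thesis by blast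
qed

lemma Hcon:
  fixes Q :: "'k::field poly"
  assumes K: "subr K" and kQ: "Kb1 K Q" and Q0: "coeff Q 0 = 1"
  shows "\<forall>r. Kb1 K r \<longrightarrow> (\<exists>H k N'. H \<in> ring_gen (const2 ` K \<union> {X1, evalP Q X2 / X1}) \<and> Kb K k \<and>
      iota [:r:] / X1 ^ M = H + X2 * (iota k / X1 ^ N'))"
proof (induct M)
  let ?T = "ring_gen (const2 ` K \<union> {X1, evalP Q X2 / (X1::'k ratfun2)})"
  have CT: "const2 ` K \<subseteq> ?T" by (auto intro: ring_gen.gen)
  have X1T: "X1 \<in> ?T" "evalP Q X2 / X1 \<in> ?T" by (auto intro: ring_gen.gen)
  case 0
  show ?case
  proof (intro allI impI)
    fix r :: "'k poly" assume "Kb1 K r"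
    then have "evalP r X1 \<in> ?T" by (rule evalP_in[OF CT X1T(1)])
    then show "\<exists>H k N'. H \<in> ?T \<and> Kb K k \<and> iota [:r:] / X1 ^ 0 = H + X2 * (iota k / X1 ^ N')"
      by (intro exI[of _ "evalP r X1"] exI[of _ 0] exI[of _ 0]) (simp add: evalP_X1 Kb_0 K iota_0)
  qed
next
  let ?T = "ring_gen (const2 ` K \<union> {X1, evalP Q X2 / (X1::'k ratfun2)})"
  let ?A = "evalP Q X2 / (X1::'k ratfun2)"
  have CT: "const2 ` K \<subseteq> ?T" by (auto intro: ring_gen.gen)
  have X1T: "X1 \<in> ?T" "?A \<in> ?T" by (auto intro: ring_gen.gen)
  case (Suc M)
  show ?case
  proof (intro allI impI)
    fix r :: "'k poly" assume kr: "Kb1 K r"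
    obtain c r' where r': "r = pCons c r'" by (metis pCons_cases)
    then have kr': "Kb1 K r'" and c: "c \<in> K" using kr by (simp_all add: Kb1_pCons)
    obtain H' k' N' where IH: "H' \<in> ?T" "Kb K k'" "iota [:r':] / X1 ^ M = H' + X2 * (iota k' / X1 ^ N')"
      using Suc kr' by blast
    obtain w where w: "Kb K w" "emb Q ^ Suc M = 1 + [:0,1:] * w" using embQ_pow[OF K kQ Q0] by blast
    have ir: "iota [:r:] = const2 c + X1 * iota [:r':]"
    proof -
      have "[:r:] = [:[:c:]:] + [:[:0,1:]:] * [:r':]" unfolding r' by simp
      then show ?thesis by (metis const2_iota X1_iota iota_add iota_mult)
    qed
    have eQ: "evalP Q X2 ^ Suc M = 1 + X2 * iota w"
      by (simp only: evalP_X2 iota_pow[symmetric] w(2) iota_add iota_mult iota_1 X2_iota[symmetric])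
    define k where "k = k' * [:[:0,1:]:] ^ Suc M - [:[:c:]:] * w * [:[:0,1:]:] ^ N'"
    have kk: "Kb K k" unfolding k_def
      using IH(2) w(1) c K by (intro Kb_diff Kb_mult Kb_pow Kb_X Kb_const Kb1_const) auto
    have ik0: "iota k = iota k' * X1 ^ Suc M - const2 c * iota w * X1 ^ N'"
      by (simp only: k_def iota_diff iota_mult iota_pow const2_iota X1_iota)
    have ik: "iota k / X1 ^ (N' + Suc M) = iota k' / X1 ^ N' - const2 c * iota w / X1 ^ Suc M"
      unfolding ik0 by (simp add: field_simps power_add X1_nz)
    define H where "H = const2 c * ?A ^ Suc M + H'"
    have HT: "H \<in> ?T" unfolding H_def using c CT
      by (intro ring_gen.add ring_gen.mult rg_pow X1T IH(1)) auto
    have "iota [:r:] / X1 ^ Suc M = const2 c / X1 ^ Suc M + iota [:r':] / X1 ^ M"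
      unfolding ir by (simp add: field_simps X1_nz)
    also have "const2 c / X1 ^ Suc M = const2 c * ?A ^ Suc M - X2 * (const2 c * iota w / X1 ^ Suc M)"
      by (simp only: power_divide eQ) (simp add: field_simps X1_nz)
    finally have "iota [:r:] / X1 ^ Suc M = H + X2 * (iota k / X1 ^ (N' + Suc M))"
      unfolding ik H_def IH(3) by (simp add: algebra_simps)
    then show "\<exists>H k N'. H \<in> ?T \<and> Kb K k \<and> iota [:r:] / X1 ^ Suc M = H + X2 * (iota k / X1 ^ N')"
      using HT kk by blast
  qed
qed




lemma evalP_X1_nz: "coeff P 0 = 1 \<Longrightarrow> evalP P X1 \<noteq> 0"
  by (auto simp: evalP_X1 iota_eq0)

lemma evalP_X2_nz: "coeff Q 0 = 1 \<Longrightarrow> evalP Q X2 \<noteq> 0"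
proof
  assume "coeff Q 0 = 1" "evalP Q X2 = 0"
  then have "emb Q = 0" by (simp add: evalP_X2 iota_eq0)
  then have "coeff (emb Q) 0 = 0" by simp
  then show False using \<open>coeff Q 0 = 1\<close> by (simp add: emb_def coeff_map_poly)
qed

lemma mem_facts:
  fixes P Q :: "'k::field poly"
  assumes kP: "Kb1 K P" and kQ: "Kb1 K Q" and P0: "coeff P 0 = 1" and Q0: "coeff Q 0 = 1"
  shows "evalP Q X2 / X1 \<in> LL K (evalP P X1 / X2) X1" "X2 \<in> LL K (evalP P X1 / X2) X1"
    "evalP P X1 / X2 \<in> LL K X2 (evalP Q X2 / X1)" "X1 \<in> LL K X2 (evalP Q X2 / X1)"
proof -
  let ?A = "evalP Q X2 / (X1::'k ratfun2)"
  let ?B = "evalP P X1 / (X2::'k ratfun2)"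
  have Anz: "?A \<noteq> 0" using evalP_X2_nz[OF Q0] by (simp add: X1_nz)
  have Bnz: "?B \<noteq> 0" using evalP_X1_nz[OF P0] by (simp add: X2_nz)
  have e1: "X2 * ?B = evalP P X1" by (simp add: X2_nz)
  have e2: "?A * X1 = evalP Q X2" by (simp add: X1_nz)
  have e3: "X1 * ?A = evalP Q X2" by (simp add: X1_nz)
  have e4: "?B * X2 = evalP P X1" by (simp add: X2_nz)
  show "?A \<in> LL K ?B X1" by (rule lau2[OF Bnz X1_nz e1 e2 kP kQ])
  show "X2 \<in> LL K ?B X1" by (rule lau1[OF Bnz e1 kP])
  show "?B \<in> LL K X2 ?A" using lau2[OF Anz X2_nz e3 e4 kQ kP] by (simp add: LL_sym)
  show "X1 \<in> LL K X2 ?A" using lau1[OF Anz e3 kQ] by (simp add: LL_sym)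
qed

lemma helper_alg: "f = a * (H + X * c) + d \<Longrightarrow> f - a * H = d + a * X * (c::'a::comm_ring)"
  by (simp add: algebra_simps)

lemma Kb_sw: "Kb K g \<Longrightarrow> Kb K (sw g)"
  by (simp add: Kb_def Kb1_def coeff_sw)

lemma tau_facts:
  "phi X2 X1 X1 = X2" "phi X2 X1 X2 = X1" "phi X2 X1 (phi X2 X1 x) = x"
  "phi X2 X1 (iota g) = iota (sw g)"
  by (simp_all add: indep_X2X1 phi_X1 phi_X2 phi_comp phi_iota ev2_X2X1)

lemma LemII:
  fixes P Q :: "'k::field poly"
  assumes K: "subr K" and kP: "Kb1 K P" and kQ: "Kb1 K Q" and P0: "coeff P 0 = 1" and Q0: "coeff Q 0 = 1"
  shows "\<forall>g N. Kb K g \<longrightarrow> iota g / (X1 ^ N * X2 ^ s) \<in> LL K (evalP P X1 / X2) X1 \<longrightarrow>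
     iota g / (X1 ^ N * X2 ^ s) \<in> LL K X2 (evalP Q X2 / X1) \<longrightarrow>
     iota g / (X1 ^ N * X2 ^ s) \<in> ring_gen (const2 ` K \<union> {X1, X2, evalP Q X2 / X1, evalP P X1 / X2})"
proof (induct s)
  let ?A = "evalP Q X2 / (X1::'k ratfun2)"
  let ?B = "evalP P X1 / (X2::'k ratfun2)"
  let ?T = "ring_gen (const2 ` K \<union> {X1, X2, ?A, ?B})"
  case 0
  show ?case
  proof (intro allI impI)
    fix g :: "'k poly poly" and N
    assume kg: "Kb K g" and f1: "iota g / (X1 ^ N * X2 ^ 0) \<in> LL K ?B X1"
      and f2: "iota g / (X1 ^ N * X2 ^ 0) \<in> LL K X2 ?A"
    let ?f = "iota g / (X1 ^ N * X2 ^ 0)"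
    have "phi X2 X1 ?f \<in> LL K (phi X2 X1 X2) (phi X2 X1 ?A)"
      using LL_phi2[OF indep_X2X1] f2 by blast
    moreover have "phi X2 X1 ?A = evalP Q X1 / X2"
      by (simp add: indep_X2X1 phi_divide phi_evalP tau_facts)
    moreover have tf: "phi X2 X1 ?f = iota (sw g) / X2 ^ N"
      by (simp add: indep_X2X1 phi_divide phi_mult phi_pow tau_facts)
    ultimately have "iota (sw g) / X2 ^ N \<in> LL K (evalP Q X1 / X2) X1"
      by (simp add: tau_facts LL_sym)
    then have "iota (sw g) / X2 ^ N \<in> ring_gen (const2 ` K \<union> {X1, X2, evalP Q X1 / X2})"
      using LemI[OF K kQ Q0] Kb_sw[OF kg] by blast
    then have "phi X2 X1 ?f \<in> ring_gen (const2 ` K \<union> {X1, X2, evalP Q X1 / X2})" using tf by simp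
    then have "phi X2 X1 (phi X2 X1 ?f) \<in> phi X2 X1 ` ring_gen (const2 ` K \<union> {X1, X2, evalP Q X1 / X2})"
      by (rule imageI)
    also have "\<dots> \<subseteq> ring_gen (phi X2 X1 ` (const2 ` K \<union> {X1, X2, evalP Q X1 / X2}))"
      by (rule phi_rg_image[OF indep_X2X1])
    also have "\<dots> \<subseteq> ?T"
    proof (rule rg_mono)
      have "phi X2 X1 (evalP Q X1 / X2) = ?A"
        by (simp add: indep_X2X1 phi_divide phi_evalP tau_facts)
      moreover have "phi X2 X1 ` const2 ` K = const2 ` K"
        by (simp add: image_image indep_X2X1 phi_const2)
      ultimately show "phi X2 X1 ` (const2 ` K \<union> {X1, X2, evalP Q X1 / X2}) \<subseteq> const2 ` K \<union> {X1, X2, ?A, ?B}"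
        by (simp add: tau_facts image_Un) blast
    qed
    finally show "?f \<in> ?T" by (simp only: tau_facts(3))
  qed
next
  let ?A = "evalP Q X2 / (X1::'k ratfun2)"
  let ?B = "evalP P X1 / (X2::'k ratfun2)"
  let ?T = "ring_gen (const2 ` K \<union> {X1, X2, ?A, ?B})"
  case (Suc s)
  show ?case
  proof (intro allI impI)
    fix g :: "'k poly poly" and N
    assume kg: "Kb K g" and f1: "iota g / (X1 ^ N * X2 ^ Suc s) \<in> LL K ?B X1"
      and f2: "iota g / (X1 ^ N * X2 ^ Suc s) \<in> LL K X2 ?A"
    define f where "f = iota g / (X1 ^ N * X2 ^ Suc s)"
    have P0': "P \<noteq> 0" using P0 by auto
    obtain r M where rM: "Kb1 K r" "coeff g 0 * [:0,1:] ^ M = P ^ Suc s * r * [:0,1:] ^ N"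
      using Coef[OF K P0' kg f1] by blast
    obtain H k N' where Hk: "H \<in> ring_gen (const2 ` K \<union> {X1, ?A})" "Kb K k"
        "iota [:r:] / X1 ^ M = H + X2 * (iota k / X1 ^ N')"
      using Hcon[OF K kQ Q0] rM(1) by blast
    obtain g0 g'' where gg: "g = pCons g0 g''" by (metis pCons_cases)
    then have kg'': "Kb K g''" and kg0: "Kb1 K g0" using kg by (simp_all add: Kb_pCons)
    have ig: "iota g = iota [:g0:] + X2 * iota g''"
    proof -
      have "g = [:g0:] + [:0,1:] * g''" unfolding gg by simp
      then show ?thesis by (metis iota_add iota_mult X2_iota)
    qed
    have rel: "iota [:g0:] * X1 ^ M = iota [:P:] ^ Suc s * iota [:r:] * X1 ^ N"
    proof -
      have "[:g0 * [:0,1:] ^ M:] = [:P ^ Suc s * r * [:0,1:] ^ N:]" using rM(2) gg by simp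
      then have "iota [:g0 * [:0,1:] ^ M:] = iota [:P ^ Suc s * r * [:0,1:] ^ N:]" by simp
      then show ?thesis
        by (simp only: const_mult_poly const_pow_poly iota_mult iota_pow X1_iota)
    qed
    have Pnz: "iota [:P:] \<noteq> (0::'k ratfun2)" using P0' by (simp add: iota_eq0)
    have Bn: "?B ^ Suc s = iota [:P:] ^ Suc s / X2 ^ Suc s" by (simp add: power_divide evalP_X1)
    define g3 where "g3 = g'' * [:[:0,1:]:] ^ N' + [:P:] ^ Suc s * k * [:[:0,1:]:] ^ N"
    have kg3: "Kb K g3" unfolding g3_def
      using kg'' Hk(2) kP K by (intro Kb_add Kb_mult Kb_pow Kb_X Kb_const) auto
    have t1: "iota [:g0:] / (X1 ^ N * X2 ^ Suc s) = ?B ^ Suc s * (iota [:r:] / X1 ^ M)"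
    proof -
      have "iota [:g0:] = iota [:P:] ^ Suc s * iota [:r:] * X1 ^ N / X1 ^ M"
        using rel by (simp add: field_simps X1_nz)
      then show ?thesis unfolding Bn by (simp add: field_simps X1_nz X2_nz)
    qed
    have "f - ?B ^ Suc s * H = iota g'' / (X1 ^ N * X2 ^ s) + ?B ^ Suc s * X2 * (iota k / X1 ^ N')"
    proof -
      have "f = iota [:g0:] / (X1 ^ N * X2 ^ Suc s) + iota g'' / (X1 ^ N * X2 ^ s)"
        unfolding f_def ig by (simp add: field_simps X1_nz X2_nz)
      also have "\<dots> = ?B ^ Suc s * (H + X2 * (iota k / X1 ^ N')) + iota g'' / (X1 ^ N * X2 ^ s)"
        unfolding t1 Hk(3) ..
      finally show ?thesis by (rule helper_alg)
    qed
    also have "\<dots> = iota g3 / (X1 ^ (N + N') * X2 ^ s)"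
    proof -
      have i3: "iota g3 = iota g'' * X1 ^ N' + iota [:P:] ^ Suc s * iota k * X1 ^ N"
        by (simp only: g3_def iota_add iota_mult iota_pow X1_iota)
      show ?thesis unfolding i3 Bn by (simp add: field_simps power_add X1_nz X2_nz)
    qed
    finally have eq: "f - ?B ^ Suc s * H = iota g3 / (X1 ^ (N + N') * X2 ^ s)" .
    have sub1: "const2 ` K \<union> {X1, ?A} \<subseteq> LL K ?B X1"
      using mem_facts(1)[OF kP kQ P0 Q0] LL_C[of K ?B X1] LL_gens(3)[of X1 K ?B] by blast
    have sub2: "const2 ` K \<union> {X1, ?A} \<subseteq> LL K X2 ?A"
      using mem_facts(4)[OF kP kQ P0 Q0] LL_C[of K X2 ?A] LL_gens(3)[of ?A K X2] by blast
    have HL1: "H \<in> LL K ?B X1"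
      using Hk(1) rg_sub[OF sub1[unfolded LL_def]] unfolding LL_def by blast
    have HL2: "H \<in> LL K X2 ?A"
      using Hk(1) rg_sub[OF sub2[unfolded LL_def]] unfolding LL_def by blast
    have m1: "f - ?B ^ Suc s * H \<in> LL K ?B X1"
      using f1 unfolding f_def by (intro LL_diff LL_mult LL_pow LL_gens HL1)
    have m2: "f - ?B ^ Suc s * H \<in> LL K X2 ?A"
      using f2 mem_facts[OF kP kQ P0 Q0] unfolding f_def by (intro LL_diff LL_mult LL_pow HL2)
    have "f - ?B ^ Suc s * H \<in> ?T" using Suc kg3 m1 m2 unfolding eq by blast
    moreover have "?B ^ Suc s * H \<in> ?T"
    proof -
      have "H \<in> ?T" using Hk(1) rg_mono[of "const2 ` K \<union> {X1, ?A}" "const2 ` K \<union> {X1, X2, ?A, ?B}"]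
        by blast
      then show ?thesis by (intro ring_gen.mult rg_pow) (auto intro: ring_gen.gen)
    qed
    ultimately have "(f - ?B ^ Suc s * H) + ?B ^ Suc s * H \<in> ?T" by (rule ring_gen.add)
    then show "iota g / (X1 ^ N * X2 ^ Suc s) \<in> ?T" by (simp add: f_def)
  qed
qed




lemma baseU:
  fixes P Q :: "'k::field poly"
  assumes K: "subr K" and kP: "Kb1 K P" and kQ: "Kb1 K Q" and P0: "coeff P 0 = 1" and Q0: "coeff Q 0 = 1"
    and f1: "f \<in> LL K X1 X2" and f2: "f \<in> LL K X2 (evalP Q X2 / X1)" and f3: "f \<in> LL K (evalP P X1 / X2) X1"
  shows "f \<in> ring_gen (const2 ` K \<union> {X1, X2, evalP Q X2 / X1, evalP P X1 / X2})"
proof -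
  obtain p N where p: "Kb K p" "f = iota p / (X1 * X2) ^ N" using LL_base[OF K f1] by blast
  then have fe: "f = iota p / (X1 ^ N * X2 ^ N)" by (simp add: power_mult_distrib)
  show ?thesis using LemII[OF K kP kQ P0 Q0, of N] p(1) f2 f3 unfolding fe by blast
qed

lemma genU:
  fixes P Q :: "'k::field poly"
  assumes K: "subr K" and kP: "Kb1 K P" and kQ: "Kb1 K Q" and P0: "coeff P 0 = 1" and Q0: "coeff Q 0 = 1"
    and ind: "indep a b"
    and f1: "f \<in> LL K a b" and f2: "f \<in> LL K b (evalP Q b / a)" and f3: "f \<in> LL K (evalP P a / b) a"
  shows "f \<in> ring_gen (const2 ` K \<union> {a, b, evalP Q b / a, evalP P a / b})"
proof -
  let ?phi = "phi a b"
  have px: "?phi X1 = a" "?phi X2 = b" "?phi (evalP Q X2 / X1) = evalP Q b / a"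
      "?phi (evalP P X1 / X2) = evalP P a / b"
    using ind by (simp_all add: phi_X1 phi_X2 phi_divide phi_evalP)
  have "f \<in> LL K (?phi X1) (?phi X2)" using f1 px by simp
  then obtain f1' where g1: "f1' \<in> LL K X1 X2" "f = ?phi f1'" using LL_phi1[OF ind] by blast
  have "f \<in> LL K (?phi X2) (?phi (evalP Q X2 / X1))" using f2 px by simp
  then obtain f2' where g2: "f2' \<in> LL K X2 (evalP Q X2 / X1)" "f = ?phi f2'" using LL_phi1[OF ind] by blast
  have "f \<in> LL K (?phi (evalP P X1 / X2)) (?phi X1)" using f3 px by simp
  then obtain f3' where g3: "f3' \<in> LL K (evalP P X1 / X2) X1" "f = ?phi f3'" using LL_phi1[OF ind] by blast
  have "f2' = f1'" "f3' = f1'" using g1(2) g2(2) g3(2) phi_inj[OF ind] by metis+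
  then have "f1' \<in> ring_gen (const2 ` K \<union> {X1, X2, evalP Q X2 / X1, evalP P X1 / X2})"
    using baseU[OF K kP kQ P0 Q0 g1(1)] g2(1) g3(1) by simp
  then have "f \<in> ?phi ` ring_gen (const2 ` K \<union> {X1, X2, evalP Q X2 / X1, evalP P X1 / X2})"
    using g1(2) by blast
  also have "\<dots> \<subseteq> ring_gen (?phi ` (const2 ` K \<union> {X1, X2, evalP Q X2 / X1, evalP P X1 / X2}))"
    by (rule phi_rg_image[OF ind])
  also have "?phi ` (const2 ` K \<union> {X1, X2, evalP Q X2 / X1, evalP P X1 / X2}) =
      const2 ` K \<union> {a, b, evalP Q b / a, evalP P a / b}"
    using ind by (simp add: image_Un image_image phi_const2 px)
  finally show ?thesis .
qed




lemma fwd_Suc: "fwd P1 P2 (Suc n) = (snd (fwd P1 P2 n),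
    evalP (Psel P1 P2 (int n + 2)) (snd (fwd P1 P2 n)) / fst (fwd P1 P2 n))"
  by (simp add: Let_def split_beta)

lemma bwd_Suc: "bwd P1 P2 (Suc n) = (evalP (Psel P1 P2 (1 - int n)) (fst (bwd P1 P2 n)) / snd (bwd P1 P2 n),
    fst (bwd P1 P2 n))"
  by (simp add: Let_def split_beta)

lemma fwd_pair: "fwd P1 P2 n = (xseq P1 P2 (int n + 1), xseq P1 P2 (int n + 2))"
proof -
  have "fst (fwd P1 P2 n) = xseq P1 P2 (int n + 1)" for n by (simp add: xseq_def)
  moreover have "snd (fwd P1 P2 n) = fst (fwd P1 P2 (Suc n))" by (simp only: fwd_Suc fst_conv)
  ultimately show ?thesis by (metis prod.collapse of_nat_Suc add.commute add.left_commute one_add_one)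
qed

lemma bwd_pair: "bwd P1 P2 n = (xseq P1 P2 (1 - int n), xseq P1 P2 (2 - int n))"
proof -
  have f: "fst (bwd P1 P2 n) = xseq P1 P2 (1 - int n)" for n
  proof (cases n)
    case 0 then show ?thesis by (simp add: xseq_def)
  next
    case (Suc m)
    have e: "nat (1 - (1 - int n)) = n" by simp
    have "\<not> 1 - int n \<ge> 1" using Suc by simp
    then show ?thesis unfolding xseq_def e by simp
  qed
  have "snd (bwd P1 P2 n) = xseq P1 P2 (2 - int n)"
  proof (cases n)
    case 0 then show ?thesis by (simp add: xseq_def)
  next
    case (Suc m)
    then have "snd (bwd P1 P2 n) = fst (bwd P1 P2 m)" by (simp only: bwd_Suc snd_conv)
    then show ?thesis using f[of m] Suc by simp
  qed
  then show ?thesis using f by (metis prod.collapse)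
qed

lemma Psel_nz: "P1 \<noteq> 0 \<Longrightarrow> P2 \<noteq> 0 \<Longrightarrow> Psel P1 P2 k \<noteq> 0"
  by (simp add: Psel_def)

lemma fwd_indep: "P1 \<noteq> 0 \<Longrightarrow> P2 \<noteq> 0 \<Longrightarrow> indep (fst (fwd P1 P2 n)) (snd (fwd P1 P2 n))"
proof (induct n)
  case 0 then show ?case by (simp add: indep_X1X2)
next
  case (Suc n)
  then have "indep (fst (fwd P1 P2 n)) (snd (fwd P1 P2 n))" by simp
  then show ?case unfolding fwd_Suc fst_conv snd_conv using Suc.prems by (intro indep_fwd Psel_nz)
qed

lemma bwd_indep: "P1 \<noteq> 0 \<Longrightarrow> P2 \<noteq> 0 \<Longrightarrow> indep (fst (bwd P1 P2 n)) (snd (bwd P1 P2 n))"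
proof (induct n)
  case 0 then show ?case by (simp add: indep_X1X2)
next
  case (Suc n)
  then have "indep (fst (bwd P1 P2 n)) (snd (bwd P1 P2 n))" by simp
  then show ?case unfolding bwd_Suc fst_conv snd_conv using Suc.prems by (intro indep_bwd Psel_nz)
qed

lemma x_indep:
  assumes "P1 \<noteq> 0" "P2 \<noteq> 0"
  shows "indep (xseq P1 P2 k) (xseq P1 P2 (k + 1))"
proof (cases "k \<ge> 1")
  case True
  then have "fwd P1 P2 (nat (k - 1)) = (xseq P1 P2 k, xseq P1 P2 (k + 1))"
    by (simp add: fwd_pair algebra_simps)
  then show ?thesis using fwd_indep[OF assms, of "nat (k - 1)"] by simp
next
  case False
  then have "bwd P1 P2 (nat (1 - k)) = (xseq P1 P2 k, xseq P1 P2 (k + 1))"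
    by (simp add: bwd_pair algebra_simps)
  then show ?thesis using bwd_indep[OF assms, of "nat (1 - k)"] by simp
qed

lemma x_nz: "P1 \<noteq> 0 \<Longrightarrow> P2 \<noteq> 0 \<Longrightarrow> xseq P1 P2 k \<noteq> 0"
  using indep_nz(1)[OF x_indep] by blast

lemma x_rec:
  assumes "P1 \<noteq> 0" "P2 \<noteq> 0"
  shows "xseq P1 P2 (k + 1) * xseq P1 P2 (k - 1) = evalP (Psel P1 P2 k) (xseq P1 P2 k)"
proof (cases "k \<ge> 2")
  case True
  define n where "n = nat (k - 2)"
  have "snd (fwd P1 P2 (Suc n)) = evalP (Psel P1 P2 (int n + 2)) (snd (fwd P1 P2 n)) / fst (fwd P1 P2 n)"
    by (simp only: fwd_Suc snd_conv)
  then have "xseq P1 P2 (int n + 3) = evalP (Psel P1 P2 (int n + 2)) (xseq P1 P2 (int n + 2)) / xseq P1 P2 (int n + 1)"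
    by (simp add: fwd_pair add.assoc add.commute)
  moreover have "int n + 2 = k" "int n + 3 = k + 1" "int n + 1 = k - 1" using True n_def by simp_all
  ultimately have "xseq P1 P2 (k + 1) = evalP (Psel P1 P2 k) (xseq P1 P2 k) / xseq P1 P2 (k - 1)"
    by simp
  then show ?thesis using x_nz[OF assms, of "k - 1"] by simp
next
  case False
  define n where "n = nat (1 - k)"
  have "fst (bwd P1 P2 (Suc n)) = evalP (Psel P1 P2 (1 - int n)) (fst (bwd P1 P2 n)) / snd (bwd P1 P2 n)"
    by (simp only: bwd_Suc fst_conv)
  then have "xseq P1 P2 (- int n) = evalP (Psel P1 P2 (1 - int n)) (xseq P1 P2 (1 - int n)) / xseq P1 P2 (2 - int n)"
    by (simp add: bwd_pair)
  moreover have "1 - int n = k" "- int n = k - 1" "2 - int n = k + 1" using False n_def by simp_all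
  ultimately have "xseq P1 P2 (k - 1) = evalP (Psel P1 P2 k) (xseq P1 P2 k) / xseq P1 P2 (k + 1)"
    by simp
  then show ?thesis using x_nz[OF assms, of "k + 1"] by simp
qed

lemma Psel_2: "Psel P1 P2 (k + 2) = Psel P1 P2 k"
  by (simp add: Psel_def)




locale cl =
  fixes P1 P2 :: "'k::field poly"
  assumes m1: "lead_coeff P1 = 1" and m2: "lead_coeff P2 = 1"
    and pa1: "palindromic P1" and pa2: "palindromic P2"
begin

abbreviation "x \<equiv> xseq P1 P2"
abbreviation "K \<equiv> kbar P1 P2"

lemma nz: "P1 \<noteq> 0" "P2 \<noteq> 0" using m1 m2 by auto

lemma subK: "subr K" by (rule subr_kbar)

lemma pal: "palindromic (Psel P1 P2 k)" using pa1 pa2 by (simp add: Psel_def)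

lemma c0: "coeff (Psel P1 P2 k) 0 = 1"
proof -
  have "coeff P 0 = lead_coeff P" if "palindromic P" for P :: "'k poly"
    using that unfolding palindromic_def by (metis diff_zero le0)
  then show ?thesis using m1 m2 pa1 pa2 by (simp add: Psel_def)
qed

lemma kb: "Kb1 K (Psel P1 P2 k)"
  by (auto simp: Kb1_def Psel_def kbar_def intro: ring_gen.gen)

lemma rec: "x (k + 1) * x (k - 1) = evalP (Psel P1 P2 k) (x k)"
  by (rule x_rec[OF nz])

lemma xnz: "x k \<noteq> 0" by (rule x_nz[OF nz])

lemma Tk_eq: "Tk P1 P2 k = LL K (x k) (x (k + 1))"
  by (simp add: Tk_def LL_def)

lemma s1f: "x (j + 1) \<in> LL K (x (j - 1)) (x j)"
  by (rule lau1[OF xnz rec kb])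

lemma s1b: "x (j - 1) \<in> LL K (x j) (x (j + 1))"
proof -
  have "x (j - 1) * x (j + 1) = evalP (Psel P1 P2 j) (x j)" using rec[of j] by (simp add: mult.commute)
  then have "x (j - 1) \<in> LL K (x (j + 1)) (x j)" by (rule lau1[OF xnz _ kb])
  then show ?thesis by (simp add: LL_sym)
qed

lemma rec1: "x (j + 2) * x j = evalP (Psel P1 P2 (j + 1)) (x (j + 1))"
  using rec[of "j + 1"] by (simp add: add.assoc)

lemma s2f: "x (j + 2) \<in> LL K (x (j - 1)) (x j)"
  by (rule lau2[OF xnz xnz rec rec1 kb kb])

lemma s2b: "x (j - 1) \<in> LL K (x (j + 1)) (x (j + 2))"
proof -
  have r1: "x j * x (j + 2) = evalP (Psel P1 P2 (j + 1)) (x (j + 1))" using rec1[of j] by (simp add: mult.commute)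
  have r2: "x (j - 1) * x (j + 1) = evalP (Psel P1 P2 j) (x j)" using rec[of j] by (simp add: mult.commute)
  have "x (j - 1) \<in> LL K (x (j + 2)) (x (j + 1))" by (rule lau2[OF xnz xnz r1 r2 kb kb])
  then show ?thesis by (simp add: LL_sym)
qed

lemma s3f: "x (j + 3) \<in> LL K (x (j - 1)) (x j)"
proof -
  have r3: "x (j + 3) * x (j + 1) = evalP (Psel P1 P2 j) (x (j + 2))"
    using rec[of "j + 2"] Psel_2[of P1 P2 j] by (simp add: add.assoc add.commute)
  show ?thesis by (rule lau3[OF subK xnz xnz xnz rec rec1 r3 kb kb c0 pal])
qed

lemma s3b: "x (j - 2) \<in> LL K (x (j + 1)) (x (j + 2))"
proof -
  have r1: "x j * x (j + 2) = evalP (Psel P1 P2 (j + 1)) (x (j + 1))" using rec1[of j] by (simp add: mult.commute)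
  have r2: "x (j - 1) * x (j + 1) = evalP (Psel P1 P2 j) (x j)" using rec[of j] by (simp add: mult.commute)
  have r3: "x (j - 2) * x j = evalP (Psel P1 P2 (j + 1)) (x (j - 1))"
  proof -
    have "x (j - 1 + 1) * x (j - 1 - 1) = evalP (Psel P1 P2 (j - 1)) (x (j - 1))" by (rule rec)
    moreover have "Psel P1 P2 (j - 1) = Psel P1 P2 (j + 1)" using Psel_2[of P1 P2 "j - 1"] by (simp add: add.commute)
    ultimately show ?thesis by (simp add: mult.commute)
  qed
  have "x (j - 2) \<in> LL K (x (j + 2)) (x (j + 1))" by (rule lau3[OF subK xnz xnz xnz r1 r2 r3 kb kb c0 pal])
  then show ?thesis by (simp add: LL_sym)
qed

definition Bm :: "int \<Rightarrow> 'k ratfun2 set" where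
  "Bm m = ring_gen (const2 ` K \<union> {x (m - 1), x m, x (m + 1), x (m + 2)})"

lemma Bm_gen: "x (m - 1) \<in> Bm m" "x m \<in> Bm m" "x (m + 1) \<in> Bm m" "x (m + 2) \<in> Bm m"
    "const2 ` K \<subseteq> Bm m"
  unfolding Bm_def by (auto intro: ring_gen.gen)

lemma LL_sub: "const2 ` K \<subseteq> LL K u v \<Longrightarrow> a \<in> LL K u v \<Longrightarrow> b \<in> LL K u v \<Longrightarrow> c \<in> LL K u v \<Longrightarrow>
   d \<in> LL K u v \<Longrightarrow> ring_gen (const2 ` K \<union> {a, b, c, d}) \<subseteq> LL K u v"
  unfolding LL_def by (rule rg_sub) auto

lemma F1: "Bm m \<subseteq> LL K (x (m - 1)) (x m)" "Bm m \<subseteq> LL K (x m) (x (m + 1))"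
    "Bm m \<subseteq> LL K (x (m + 1)) (x (m + 2))"
proof -
  show "Bm m \<subseteq> LL K (x (m - 1)) (x m)" unfolding Bm_def
    by (rule LL_sub[OF LL_C LL_gens(1) LL_gens(3) s1f s2f])
  have a: "x (m + 2) \<in> LL K (x m) (x (m + 1))" using s1f[of "m + 1"] by (simp add: add.assoc)
  show "Bm m \<subseteq> LL K (x m) (x (m + 1))" unfolding Bm_def
    by (rule LL_sub[OF LL_C s1b LL_gens(1) LL_gens(3) a])
  have b: "x m \<in> LL K (x (m + 1)) (x (m + 2))" using s1b[of "m + 1"] by (simp add: add.assoc)
  show "Bm m \<subseteq> LL K (x (m + 1)) (x (m + 2))" unfolding Bm_def
    by (rule LL_sub[OF LL_C s2b b LL_gens(1) LL_gens(3)])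
qed

lemma F2:
  assumes "f \<in> LL K (x (m - 1)) (x m)" "f \<in> LL K (x m) (x (m + 1))" "f \<in> LL K (x (m + 1)) (x (m + 2))"
  shows "f \<in> Bm m"
proof -
  have e1: "evalP (Psel P1 P2 (m + 1)) (x (m + 1)) / x m = x (m + 2)"
    using rec1[of m] xnz[of m] by (simp add: field_simps)
  have e2: "evalP (Psel P1 P2 m) (x m) / x (m + 1) = x (m - 1)"
    using rec[of m] xnz[of "m + 1"] by (simp add: field_simps)
  have "f \<in> ring_gen (const2 ` K \<union> {x m, x (m + 1), evalP (Psel P1 P2 (m + 1)) (x (m + 1)) / x m,
      evalP (Psel P1 P2 m) (x m) / x (m + 1)})"
    by (rule genU[OF subK kb kb c0 c0 x_indep[OF nz]]) (use assms in \<open>simp_all add: e1 e2\<close>)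
  then show ?thesis unfolding e1 e2 Bm_def by (simp add: insert_commute)
qed

lemma F3: "Bm (m + 1) = Bm m"
proof
  have "x (m + 3) \<in> Bm m"
  proof (rule F2)
    show "x (m + 3) \<in> LL K (x (m - 1)) (x m)" by (rule s3f)
    show "x (m + 3) \<in> LL K (x m) (x (m + 1))" using s2f[of "m + 1"] by (simp add: add.assoc)
    show "x (m + 3) \<in> LL K (x (m + 1)) (x (m + 2))" using s1f[of "m + 2"] by (simp add: add.assoc add.commute)
  qed
  then have S: "const2 ` K \<union> {x (m + 1 - 1), x (m + 1), x (m + 1 + 1), x (m + 1 + 2)} \<subseteq> Bm m"
    using Bm_gen[of m] by (auto simp: add.assoc)
  show "Bm (m + 1) \<subseteq> Bm m" unfolding Bm_def by (rule rg_sub[OF S[unfolded Bm_def]])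
  have "x (m - 1) \<in> Bm (m + 1)"
  proof (rule F2)
    show "x (m - 1) \<in> LL K (x (m + 1 - 1)) (x (m + 1))" using s1b[of m] by simp
    show "x (m - 1) \<in> LL K (x (m + 1)) (x (m + 1 + 1))" using s2b[of m] by (simp add: add.assoc)
    show "x (m - 1) \<in> LL K (x (m + 1 + 1)) (x (m + 1 + 2))" using s3b[of "m + 1"] by (simp add: add.assoc)
  qed
  then have S: "const2 ` K \<union> {x (m - 1), x m, x (m + 1), x (m + 2)} \<subseteq> Bm (m + 1)"
    using Bm_gen[of "m + 1"] by (auto simp: add.assoc)
  show "Bm m \<subseteq> Bm (m + 1)" unfolding Bm_def by (rule rg_sub[OF S[unfolded Bm_def]])
qed

lemma F4: "Bm m = Bm 0"
proof (induct m rule: int_induct[where k = 0])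
  case base show ?case ..
next
  case (step1 i) then show ?case using F3[of i] by simp
next
  case (step2 i) then show ?case using F3[of "i - 1"] by simp
qed

lemma A_eq: "clusterA P1 P2 = Bm 0"
proof
  show "clusterA P1 P2 \<subseteq> Bm 0" unfolding clusterA_def
  proof (rule rg_sub[of _ "const2 ` K \<union> {x (0 - 1), x 0, x (0 + 1), x (0 + 2)}", folded Bm_def])
    have "x j \<in> Bm 0" for j using Bm_gen(2)[of j] F4[of j] by simp
    then show "const2 ` K \<union> range x \<subseteq> Bm 0" using Bm_gen(5)[of 0] by auto
  qed
  show "Bm 0 \<subseteq> clusterA P1 P2" unfolding clusterA_def Bm_def by (rule rg_mono) auto
qed

lemma A_T: "clusterA P1 P2 \<subseteq> Tk P1 P2 k"
  using F1(2)[of k] F4[of k] by (simp add: A_eq Tk_eq)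

lemma T3_A: "(\<Inter>k\<in>{m - 1..m + 1}. Tk P1 P2 k) \<subseteq> clusterA P1 P2"
proof
  fix f assume f: "f \<in> (\<Inter>k\<in>{m - 1..m + 1}. Tk P1 P2 k)"
  have "f \<in> Tk P1 P2 (m - 1)" "f \<in> Tk P1 P2 m" "f \<in> Tk P1 P2 (m + 1)" using f by auto
  then have "f \<in> Bm m" by (intro F2) (simp_all add: Tk_eq add.assoc)
  then show "f \<in> clusterA P1 P2" using F4[of m] A_eq by simp
qed

end



theorem theorem2p5:
  fixes P1 P2 :: "'k::field_char_0 poly" and m :: int
  assumes "lead_coeff P1 = 1" and "lead_coeff P2 = 1"
    and "palindromic P1" and "palindromic P2"
  shows "clusterA P1 P2 = (\<Inter>k. Tk P1 P2 k)
    \<and> (\<Inter>k. Tk P1 P2 k) = (\<Inter>k\<in>{m - 1..m + 1}. Tk P1 P2 k)"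
proof -
  interpret cl P1 P2 using assms by unfold_locales
  have 1: "clusterA P1 P2 \<subseteq> (\<Inter>k. Tk P1 P2 k)" by (rule INT_greatest) (rule A_T)
  have 2: "(\<Inter>k. Tk P1 P2 k) \<subseteq> (\<Inter>k\<in>{m - 1..m + 1}. Tk P1 P2 k)"
    by (rule INT_greatest, rule INT_lower, simp)
  have 3: "(\<Inter>k\<in>{m - 1..m + 1}. Tk P1 P2 k) \<subseteq> clusterA P1 P2" by (rule T3_A)
  show ?thesis
    using subset_antisym[OF 1 subset_trans[OF 2 3]] subset_antisym[OF 2 subset_trans[OF 3 1]] by (rule conjI)
qed

end
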